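(* Let $H$ be a tree-degenerate bipartite graph. Then for every graph $G$, $t_H(G)\geq [t_{K_2}(G)]^{e(H)}$ (i.e. $H$ satisfies Sidorenko's conjecture).
   Context: All graphs are finite and simple. For graphs $H,G$, $t_H(G)$ is the number of homomorphisms from $H$ to $G$ (maps $f:V(H)\to V(G)$ sending edges to edges) divided by $|G|^{|H|}$; thus $t_{K_2}(G)=2e(G)/|G|^2$. A bipartite graph $H$ is tree-degenerate if $V(H)$ can be partitioned into blocks $B_0,B_1,\dots,B_m$ such that $H$ is obtained by joining $B_1$ completely to $P(B_1):=B_0$ and, for each $2\le i\le m$, joining $B_i$ completely to a subset $P(B_i)$ of $B_{\gamma(i)}$ for some $1\le \gamma(i)\le i-1$, where for all $i\ge 2$, $|P(B_{\gamma(i)})|\le |P(B_i)|$, and $H$ has no other edges. *)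

theory Defs
  imports Complex_Main "HOL-Library.FuncSet"
begin

definition simple_graph :: "'a set \<Rightarrow> 'a set set \<Rightarrow> bool" where
  "simple_graph V E \<longleftrightarrow> finite V \<and>
     E \<subseteq> {e. \<exists>u v. e = {u, v} \<and> u \<noteq> v \<and> u \<in> V \<and> v \<in> V}"

definition hom_count :: "'a set \<Rightarrow> 'a set set \<Rightarrow> 'b set \<Rightarrow> 'b set set \<Rightarrow> nat" where
  "hom_count VH EH VG EG =
     card {f \<in> VH \<rightarrow>\<^sub>E VG. \<forall>u v. {u, v} \<in> EH \<longrightarrow> {f u, f v} \<in> EG}"

definition hom_density :: "'a set \<Rightarrow> 'a set set \<Rightarrow> 'b set \<Rightarrow> 'b set set \<Rightarrow> real" where
  "hom_density VH EH VG EG =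
     real (hom_count VH EH VG EG) / real (card VG) ^ card VH"

definition K2_V :: "nat set" where "K2_V = {0, 1}"
definition K2_E :: "nat set set" where "K2_E = {{0, 1}}"

definition bipartite :: "'a set \<Rightarrow> 'a set set \<Rightarrow> bool" where
  "bipartite V E \<longleftrightarrow> (\<exists>X Y. X \<inter> Y = {} \<and> X \<union> Y = V \<and>
      (\<forall>e\<in>E. \<exists>x\<in>X. \<exists>y\<in>Y. e = {x, y}))"

definition join_edges :: "'a set \<Rightarrow> 'a set \<Rightarrow> 'a set set" where
  "join_edges A B = {{u, v} | u v. u \<in> A \<and> v \<in> B}"

definition tree_degenerate :: "'a set \<Rightarrow> 'a set set \<Rightarrow> bool" where
  "tree_degenerate V E \<longleftrightarrow> bipartite V E \<and>
     (\<exists>(m::nat) (B::nat \<Rightarrow> 'a set) (P::nat \<Rightarrow> 'a set) (\<gamma>::nat \<Rightarrow> nat).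
        1 \<le> m \<and>
        (\<forall>i\<le>m. B i \<noteq> {}) \<and>
        (\<forall>i\<le>m. \<forall>j\<le>m. i \<noteq> j \<longrightarrow> B i \<inter> B j = {}) \<and>
        (\<Union>i\<le>m. B i) = V \<and>
        P 1 = B 0 \<and>
        (\<forall>i. 2 \<le> i \<and> i \<le> m \<longrightarrow>
            1 \<le> \<gamma> i \<and> \<gamma> i \<le> i - 1 \<and> P i \<subseteq> B (\<gamma> i) \<and>
            card (P (\<gamma> i)) \<le> card (P i)) \<and>
        E = (\<Union>i\<in>{1..m}. join_edges (B i) (P i)))"

end

theory Submission
  imports Defs
begin

lemma gibbs:
  fixes \<rho> f :: "'x \<Rightarrow> real"
  assumes fin: "finite S" and nn: "\<forall>x\<in>S. 0 \<le> \<rho> x" and s1: "sum \<rho> S = 1"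
    and fnn: "\<forall>x\<in>S. 0 \<le> f x" and pos: "\<forall>x\<in>S. 0 < \<rho> x \<longrightarrow> 0 < f x"
  shows "(\<Sum>x\<in>S. \<rho> x * ln (f x / \<rho> x)) \<le> ln (sum f S)"
proof -
  have "\<exists>x\<in>S. 0 < \<rho> x"
  proof (rule ccontr)
    assume "\<not> ?thesis"
    then have "\<forall>x\<in>S. \<rho> x = 0" using nn by force
    then have "sum \<rho> S = 0" by simp
    then show False using s1 by simp
  qed
  then obtain x0 where x0: "x0 \<in> S" "0 < \<rho> x0" by blast
  define F where "F = sum f S"
  have "f x0 \<le> F" unfolding F_def using fin x0 fnn by (intro member_le_sum) auto
  then have Fpos: "0 < F" using pos x0 by force
  have trm: "\<rho> x * ln (f x / \<rho> x) \<le> \<rho> x * ln F + (f x / F - \<rho> x)" if "x \<in> S" for x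
  proof (cases "\<rho> x = 0")
    case True then show ?thesis using fnn that Fpos by simp
  next
    case False
    then have rp: "0 < \<rho> x" using nn that by force
    then have fp: "0 < f x" using pos that by blast
    have "ln (f x / (\<rho> x * F)) \<le> f x / (\<rho> x * F) - 1"
      using fp rp Fpos by (intro ln_le_minus_one) simp
    moreover have "ln (f x / \<rho> x) = ln (f x / (\<rho> x * F)) + ln F"
      using fp rp Fpos by (simp add: ln_div ln_mult)
    ultimately have "ln (f x / \<rho> x) \<le> f x / (\<rho> x * F) - 1 + ln F" by linarith
    then have "\<rho> x * ln (f x / \<rho> x) \<le> \<rho> x * (f x / (\<rho> x * F) - 1 + ln F)"
      using rp by (intro mult_left_mono) auto
    also have "\<dots> = \<rho> x * ln F + (f x / F - \<rho> x)" using rp Fpos by (simp add: field_simps)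
    finally show ?thesis .
  qed
  have "(\<Sum>x\<in>S. \<rho> x * ln (f x / \<rho> x)) \<le> (\<Sum>x\<in>S. \<rho> x * ln F + (f x / F - \<rho> x))"
    using trm by (intro sum_mono) auto
  also have "\<dots> = ln F * sum \<rho> S + sum f S / F - sum \<rho> S"
    by (simp add: sum.distrib sum_subtractf sum_divide_distrib[symmetric] sum_distrib_left[symmetric] mult.commute[of _ "ln F"])
  also have "\<dots> = ln F" using s1 Fpos unfolding F_def by simp
  finally show ?thesis unfolding F_def .
qed

lemma entropy_le:
  fixes \<rho> :: "'x \<Rightarrow> real"
  assumes fin: "finite S" and nn: "\<forall>x\<in>S. 0 \<le> \<rho> x" and s1: "sum \<rho> S = 1"
  shows "- (\<Sum>x\<in>S. \<rho> x * ln (\<rho> x)) \<le> ln (card S)"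
proof -
  have "(\<Sum>x\<in>S. \<rho> x * ln (1 / \<rho> x)) \<le> ln (sum (\<lambda>_. 1) S)"
    using gibbs[OF fin nn s1, of "\<lambda>_. 1"] by simp
  moreover have "(\<Sum>x\<in>S. \<rho> x * ln (1 / \<rho> x)) = - (\<Sum>x\<in>S. \<rho> x * ln (\<rho> x))"
    unfolding sum_negf[symmetric]
  proof (rule sum.cong)
    fix x assume "x \<in> S"
    show "\<rho> x * ln (1 / \<rho> x) = - (\<rho> x * ln (\<rho> x))"
      using nn \<open>x\<in>S\<close> by (cases "\<rho> x = 0") (auto simp: ln_div)
  qed simp
  ultimately show ?thesis by simp
qed

definition mrg :: "'i set \<Rightarrow> ('i \<Rightarrow> 'b) \<Rightarrow> ('i \<Rightarrow> 'b) \<Rightarrow> 'i \<Rightarrow> 'b" where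
  "mrg R x y = (\<lambda>i. if i \<in> R then x i else y i)"

lemma merge_PiE: "x \<in> (R \<rightarrow>\<^sub>E S) \<Longrightarrow> y \<in> (B \<rightarrow>\<^sub>E S) \<Longrightarrow> mrg R x y \<in> (R \<union> B \<rightarrow>\<^sub>E S)"
  unfolding mrg_def by (auto simp: PiE_iff extensional_def)

lemma restrict_merge1: "x \<in> (R \<rightarrow>\<^sub>E S) \<Longrightarrow> restrict (mrg R x y) R = x"
  unfolding mrg_def by (auto simp: PiE_iff extensional_def restrict_def)

lemma restrict_merge2: "R \<inter> B = {} \<Longrightarrow> y \<in> (B \<rightarrow>\<^sub>E S) \<Longrightarrow> restrict (mrg R x y) B = y"
  unfolding mrg_def by (auto simp: PiE_iff extensional_def restrict_def fun_eq_iff)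

lemma sum_PiE_split:
  assumes "R \<inter> B = {}" "finite R" "finite B"
  shows "(\<Sum>z\<in>(R \<union> B \<rightarrow>\<^sub>E S). g z) = (\<Sum>x\<in>(R \<rightarrow>\<^sub>E S). \<Sum>y\<in>(B \<rightarrow>\<^sub>E S). g (mrg R x y))"
proof -
  have bij: "bij_betw (\<lambda>(x,y). mrg R x y) ((R \<rightarrow>\<^sub>E S) \<times> (B \<rightarrow>\<^sub>E S)) ((R \<union> B \<rightarrow>\<^sub>E S))"
  proof (rule bij_betw_byWitness[where f' = "\<lambda>z. (restrict z R, restrict z B)"])
    show "\<forall>a\<in>(R \<rightarrow>\<^sub>E S) \<times> (B \<rightarrow>\<^sub>E S). (\<lambda>z. (restrict z R, restrict z B)) ((\<lambda>(x, y). mrg R x y) a) = a"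
    proof
      fix a assume a: "a \<in> (R \<rightarrow>\<^sub>E S) \<times> (B \<rightarrow>\<^sub>E S)"
      then obtain x y where xy: "a = (x, y)" "x \<in> (R \<rightarrow>\<^sub>E S)" "y \<in> (B \<rightarrow>\<^sub>E S)" by blast
      show "(\<lambda>z. (restrict z R, restrict z B)) ((\<lambda>(x, y). mrg R x y) a) = a"
        using xy assms(1) restrict_merge1[OF xy(2)] restrict_merge2[OF assms(1) xy(3)] by simp
    qed
    show "\<forall>a'\<in>(R \<union> B \<rightarrow>\<^sub>E S). (\<lambda>(x, y). mrg R x y) (restrict a' R, restrict a' B) = a'"
    proof
      fix z assume z: "z \<in> (R \<union> B \<rightarrow>\<^sub>E S)"
      show "(\<lambda>(x, y). mrg R x y) (restrict z R, restrict z B) = z"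
      proof
        fix i show "(\<lambda>(x, y). mrg R x y) (restrict z R, restrict z B) i = z i"
          unfolding mrg_def using PiE_arb[OF z, of i] by auto
      qed
    qed
    show "(\<lambda>(x, y). mrg R x y) ` ((R \<rightarrow>\<^sub>E S) \<times> (B \<rightarrow>\<^sub>E S)) \<subseteq> (R \<union> B \<rightarrow>\<^sub>E S)"
    proof clarify
      fix x y assume "x \<in> (R \<rightarrow>\<^sub>E S)" "y \<in> (B \<rightarrow>\<^sub>E S)"
      then show "mrg R x y \<in> (R \<union> B \<rightarrow>\<^sub>E S)" by (rule merge_PiE)
    qed
    show "(\<lambda>z. (restrict z R, restrict z B)) ` (R \<union> B \<rightarrow>\<^sub>E S) \<subseteq> (R \<rightarrow>\<^sub>E S) \<times> (B \<rightarrow>\<^sub>E S)"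
    proof
      fix p assume "p \<in> (\<lambda>z. (restrict z R, restrict z B)) ` (R \<union> B \<rightarrow>\<^sub>E S)"
      then obtain z where z: "z \<in> (R \<union> B \<rightarrow>\<^sub>E S)" "p = (restrict z R, restrict z B)" by blast
      then show "p \<in> (R \<rightarrow>\<^sub>E S) \<times> (B \<rightarrow>\<^sub>E S)"
        by (simp add: restrict_PiE_iff PiE_iff)
    qed
  qed
  have "(\<Sum>z\<in>(R \<union> B \<rightarrow>\<^sub>E S). g z) = (\<Sum>p\<in>(R \<rightarrow>\<^sub>E S) \<times> (B \<rightarrow>\<^sub>E S). g ((\<lambda>(x,y). mrg R x y) p))"
    using sum.reindex_bij_betw[OF bij, of g] by simp
  also have "\<dots> = (\<Sum>x\<in>(R \<rightarrow>\<^sub>E S). \<Sum>y\<in>(B \<rightarrow>\<^sub>E S). g (mrg R x y))"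
    by (subst sum.cartesian_product) (simp add: case_prod_beta)
  finally show ?thesis .
qed

lemma card_restrict_fiber:
  assumes "Q \<subseteq> B" "w \<in> (Q \<rightarrow>\<^sub>E S)" "finite B"
  shows "card {y \<in> (B \<rightarrow>\<^sub>E S). restrict y Q = w} = card S ^ card (B - Q)"
proof -
  have eq: "{y \<in> (B \<rightarrow>\<^sub>E S). restrict y Q = w} = mrg Q w ` (B - Q \<rightarrow>\<^sub>E S)"
  proof
    show "{y \<in> (B \<rightarrow>\<^sub>E S). restrict y Q = w} \<subseteq> mrg Q w ` (B - Q \<rightarrow>\<^sub>E S)"
    proof
      fix y assume y: "y \<in> {y \<in> (B \<rightarrow>\<^sub>E S). restrict y Q = w}"
      have "y = mrg Q w (restrict y (B - Q))"
      proof
        fix i show "y i = mrg Q w (restrict y (B - Q)) i"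
        proof -
          have yB: "y \<in> (B \<rightarrow>\<^sub>E S)" and yQ: "restrict y Q = w" using y by auto
          show ?thesis
          proof (cases "i \<in> Q")
            case True
            then have "w i = y i" using yQ by (metis restrict_apply')
            then show ?thesis using True by (simp add: mrg_def)
          next
            case False
            show ?thesis
            proof (cases "i \<in> B")
              case True then show ?thesis using False by (simp add: mrg_def)
            next
              case nb: False
              then show ?thesis using False PiE_arb[OF yB nb] by (simp add: mrg_def)
            qed
          qed
        qed
      qed
      moreover have "restrict y (B - Q) \<in> (B - Q \<rightarrow>\<^sub>E S)" using y by (simp add: restrict_PiE_iff PiE_iff)
      ultimately show "y \<in> mrg Q w ` (B - Q \<rightarrow>\<^sub>E S)" by blast
    qed
    show "mrg Q w ` (B - Q \<rightarrow>\<^sub>E S) \<subseteq> {y \<in> (B \<rightarrow>\<^sub>E S). restrict y Q = w}"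
    proof
      fix y assume "y \<in> mrg Q w ` (B - Q \<rightarrow>\<^sub>E S)"
      then obtain v where v: "v \<in> (B - Q \<rightarrow>\<^sub>E S)" and yv: "y = mrg Q w v" by blast
      have "mrg Q w v \<in> (Q \<union> (B - Q) \<rightarrow>\<^sub>E S)" using merge_PiE[OF assms(2) v] .
      moreover have "Q \<union> (B - Q) = B" using assms by auto
      ultimately show "y \<in> {y \<in> (B \<rightarrow>\<^sub>E S). restrict y Q = w}"
        using restrict_merge1[OF assms(2)] yv by auto
    qed
  qed
  have inj: "inj_on (mrg Q w) ((B - Q \<rightarrow>\<^sub>E S))"
  proof (rule inj_onI)
    fix u v assume "u \<in> (B - Q \<rightarrow>\<^sub>E S)" "v \<in> (B - Q \<rightarrow>\<^sub>E S)" "mrg Q w u = mrg Q w v"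
    note h = this
    have d: "Q \<inter> (B - Q) = {}" by blast
    have "u = restrict (mrg Q w u) (B - Q)" using restrict_merge2[OF d h(1)] by simp
    also have "\<dots> = restrict (mrg Q w v) (B - Q)" using h(3) by simp
    also have "\<dots> = v" using restrict_merge2[OF d h(2)] by simp
    finally show "u = v" .
  qed
  have "card {y \<in> (B \<rightarrow>\<^sub>E S). restrict y Q = w} = card ((B - Q \<rightarrow>\<^sub>E S))"
    unfolding eq by (rule card_image[OF inj])
  also have "\<dots> = card S ^ card (B - Q)"
    using assms by (simp add: card_PiE)
  finally show ?thesis .
qed

lemma J_alg:
  fixes t s Lt Ht Ls Hs N :: real
  assumes "0 < t" "t \<le> s" "Ht + s*Lt \<le> Hs + t*Ls" "Hs \<le> s*N" "Ht \<le> t*N"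
  shows "(Lt + Ht/t - 2*N)/t \<le> (Ls + Hs/s - 2*N)/s"
proof -
  have sp: "0 < s" using assms by linarith
  have id: "t^2 * (s*Ls + Hs - 2*s*N) - s^2 * (t*Lt + Ht - 2*t*N)
     = s*t*(Hs + t*Ls - Ht - s*Lt) + t*(s-t)*(s*N - Hs) + s*(s-t)*(t*N - Ht)"
    by (simp add: algebra_simps power2_eq_square)
  have "0 \<le> s*t*(Hs + t*Ls - Ht - s*Lt)" using assms sp by simp
  moreover have "0 \<le> t*(s-t)*(s*N - Hs)" using assms by simp
  moreover have "0 \<le> s*(s-t)*(t*N - Ht)" using assms sp by simp
  ultimately have key: "s^2 * (t*Lt + Ht - 2*t*N) \<le> t^2 * (s*Ls + Hs - 2*s*N)" using id by linarith
  have e1: "(Lt + Ht/t - 2*N)/t = (t*Lt + Ht - 2*t*N)/t^2" using assms by (simp add: field_simps power2_eq_square)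
  have e2: "(Ls + Hs/s - 2*N)/s = (s*Ls + Hs - 2*s*N)/s^2" using sp by (simp add: field_simps power2_eq_square)
  have "(t*Lt + Ht - 2*t*N)/t^2 \<le> (s*Ls + Hs - 2*s*N)/s^2"
    using key assms sp by (simp add: divide_le_eq le_divide_eq mult.commute)
  then show ?thesis using e1 e2 by simp
qed

locale sg =
  fixes V :: "'b set" and E :: "'b set set"
  assumes finV: "finite V" and Vne: "V \<noteq> {}"
begin

definition nb :: "('i \<Rightarrow> 'b) \<Rightarrow> 'i set \<Rightarrow> 'b set" where
  "nb x P = {v \<in> V. \<forall>j\<in>P. {v, x j} \<in> E}"
definition cn :: "('i \<Rightarrow> 'b) \<Rightarrow> 'i set \<Rightarrow> real" where
  "cn x P = real (card (nb x P))"
definition Kc :: "('i \<Rightarrow> 'b) \<Rightarrow> 'i set \<Rightarrow> ('j \<Rightarrow> 'b) \<Rightarrow> 'j set \<Rightarrow> bool" where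
  "Kc y P x Q \<longleftrightarrow> (\<forall>i\<in>Q. x i \<in> nb y P)"
definition chn :: "(('i \<Rightarrow> 'b) \<Rightarrow> real) \<Rightarrow> 'i set \<Rightarrow> 'j set \<Rightarrow> ('j \<Rightarrow> 'b) \<Rightarrow> real" where
  "chn \<tau> P Q w = (\<Sum>y\<in>(P \<rightarrow>\<^sub>E V). \<tau> y * (if Kc y P w Q then 1 / cn y P ^ card Q else 0))"
definition Lc :: "'i set \<Rightarrow> (('i \<Rightarrow> 'b) \<Rightarrow> real) \<Rightarrow> real" where
  "Lc P \<rho> = (\<Sum>x\<in>(P \<rightarrow>\<^sub>E V). \<rho> x * ln (cn x P))"
definition Hn :: "'x set \<Rightarrow> ('x \<Rightarrow> real) \<Rightarrow> real" where
  "Hn S \<rho> = - (\<Sum>x\<in>S. \<rho> x * ln (\<rho> x))"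
definition J :: "'i set \<Rightarrow> (('i \<Rightarrow> 'b) \<Rightarrow> real) \<Rightarrow> real" where
  "J P \<rho> = (Lc P \<rho> + Hn (P \<rightarrow>\<^sub>E V) \<rho> / card P - 2 * ln (card V)) / card P"
definition isd :: "'x set \<Rightarrow> ('x \<Rightarrow> real) \<Rightarrow> bool" where
  "isd S \<rho> \<longleftrightarrow> (\<forall>x\<in>S. 0 \<le> \<rho> x) \<and> sum \<rho> S = 1"
definition spp :: "'i set \<Rightarrow> (('i \<Rightarrow> 'b) \<Rightarrow> real) \<Rightarrow> bool" where
  "spp P \<rho> \<longleftrightarrow> (\<forall>x\<in>(P \<rightarrow>\<^sub>E V). 0 < \<rho> x \<longrightarrow> 0 < cn x P)"

lemma nb_sub: "nb x P \<subseteq> V" unfolding nb_def by blast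
lemma fin_nb: "finite (nb x P)" using finite_subset[OF nb_sub finV] .
lemma cn_nonneg: "0 \<le> cn x P" unfolding cn_def by simp
lemma fin_tup: "finite P \<Longrightarrow> finite (P \<rightarrow>\<^sub>E V)" using finV by (simp add: finite_PiE)
lemma card_tup: "finite P \<Longrightarrow> card (P \<rightarrow>\<^sub>E V) = card V ^ card P" by (simp add: card_PiE)

lemma nb_restrict: "P \<subseteq> R \<Longrightarrow> nb (restrict x R) P = nb x P"
  unfolding nb_def by (auto simp: subset_iff)
lemma cn_restrict: "P \<subseteq> R \<Longrightarrow> cn (restrict x R) P = cn x P"
  unfolding cn_def using nb_restrict[of P R x] by simp

lemma Kc_set: "{x \<in> (Q \<rightarrow>\<^sub>E V). Kc y P x Q} = (Q \<rightarrow>\<^sub>E nb y P)"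
proof
  show "{x \<in> (Q \<rightarrow>\<^sub>E V). Kc y P x Q} \<subseteq> (Q \<rightarrow>\<^sub>E nb y P)"
    unfolding Kc_def by (simp add: subset_iff PiE_iff)
  show "(Q \<rightarrow>\<^sub>E nb y P) \<subseteq> {x \<in> (Q \<rightarrow>\<^sub>E V). Kc y P x Q}"
    unfolding Kc_def using nb_sub by (force simp: subset_iff PiE_iff)
qed

lemma card_Kc: "finite Q \<Longrightarrow> real (card {x \<in> (Q \<rightarrow>\<^sub>E V). Kc y P x Q}) = cn y P ^ card Q"
  unfolding Kc_set cn_def by (simp add: card_PiE)

lemma Kc_sym: "x \<in> (Q \<rightarrow>\<^sub>E V) \<Longrightarrow> y \<in> (P \<rightarrow>\<^sub>E V) \<Longrightarrow> Kc y P x Q \<longleftrightarrow> Kc x Q y P"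
  unfolding Kc_def nb_def by (auto simp: PiE_iff insert_commute)

lemma sum_Kc_const:
  assumes "finite Q"
  shows "(\<Sum>x\<in>(Q \<rightarrow>\<^sub>E V). if Kc y P x Q then c else 0) = c * cn y P ^ card Q"
proof -
  have "(\<Sum>x\<in>(Q \<rightarrow>\<^sub>E V). if Kc y P x Q then c else 0) = (\<Sum>x\<in>{x \<in> (Q \<rightarrow>\<^sub>E V). Kc y P x Q}. c)"
    using fin_tup[OF assms] by (simp add: sum.inter_filter[symmetric])
  also have "\<dots> = c * cn y P ^ card Q" using card_Kc[OF assms, of y P] by simp
  finally show ?thesis .
qed

lemma sum_Kc_one:
  assumes "finite Q" "0 < cn y P"
  shows "(\<Sum>x\<in>(Q \<rightarrow>\<^sub>E V). if Kc y P x Q then 1 / cn y P ^ card Q else 0) = 1"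
  using sum_Kc_const[OF assms(1), of y P "1 / cn y P ^ card Q"] assms(2) by simp

lemma chain_nonneg: "isd (P \<rightarrow>\<^sub>E V) \<tau> \<Longrightarrow> 0 \<le> chn \<tau> P Q w"
  unfolding chn_def isd_def by (intro sum_nonneg) (auto intro!: mult_nonneg_nonneg simp: cn_nonneg)

lemma chain_pos_cn:
  assumes "isd (P \<rightarrow>\<^sub>E V) \<tau>" "P \<noteq> {}" "w \<in> (Q \<rightarrow>\<^sub>E V)" "0 < chn \<tau> P Q w" "P' \<subseteq> Q"
  shows "0 < cn w P'"
proof -
  have "\<exists>y\<in>(P \<rightarrow>\<^sub>E V). 0 < \<tau> y * (if Kc y P w Q then 1 / cn y P ^ card Q else 0)"
  proof (rule ccontr)
    assume "\<not> ?thesis"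
    then have "\<forall>y\<in>(P \<rightarrow>\<^sub>E V). \<tau> y * (if Kc y P w Q then 1 / cn y P ^ card Q else 0) \<le> 0" by force
    then have "chn \<tau> P Q w \<le> 0" unfolding chn_def by (intro sum_nonpos) auto
    then show False using assms(4) by simp
  qed
  then obtain y where y: "y \<in> (P \<rightarrow>\<^sub>E V)" "0 < \<tau> y * (if Kc y P w Q then 1 / cn y P ^ card Q else 0)" by blast
  then have K: "Kc y P w Q" by (cases "Kc y P w Q") auto
  obtain j where j: "j \<in> P" using assms(2) by blast
  have "y j \<in> nb w P'"
    using K y(1) j assms(3,5) unfolding Kc_def nb_def by (auto simp: PiE_iff insert_commute)
  then have "nb w P' \<noteq> {}" by blast
  then show ?thesis unfolding cn_def using fin_nb[of w P'] by (simp add: card_gt_0_iff)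
qed

lemma chain_isd:
  assumes "finite Q" "isd (P \<rightarrow>\<^sub>E V) \<tau>" "spp P \<tau>"
  shows "isd (Q \<rightarrow>\<^sub>E V) (chn \<tau> P Q)"
proof -
  have "(\<Sum>w\<in>(Q \<rightarrow>\<^sub>E V). chn \<tau> P Q w)
     = (\<Sum>y\<in>(P \<rightarrow>\<^sub>E V). \<tau> y * (\<Sum>w\<in>(Q \<rightarrow>\<^sub>E V). if Kc y P w Q then 1 / cn y P ^ card Q else 0))"
    unfolding chn_def by (subst sum.swap) (simp add: sum_distrib_left)
  also have "\<dots> = (\<Sum>y\<in>(P \<rightarrow>\<^sub>E V). \<tau> y)"
  proof (rule sum.cong)
    fix y assume y: "y \<in> (P \<rightarrow>\<^sub>E V)"
    show "\<tau> y * (\<Sum>w\<in>(Q \<rightarrow>\<^sub>E V). if Kc y P w Q then 1 / cn y P ^ card Q else 0) = \<tau> y"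
    proof (cases "\<tau> y = 0")
      case False
      then have "0 < \<tau> y" using assms(2) y unfolding isd_def by force
      then have "0 < cn y P" using assms(3) y unfolding spp_def by blast
      then show ?thesis using sum_Kc_one[OF assms(1), of y P] by simp
    qed simp
  qed simp
  also have "\<dots> = 1" using assms(2) unfolding isd_def by simp
  finally have "(\<Sum>w\<in>(Q \<rightarrow>\<^sub>E V). chn \<tau> P Q w) = 1" .
  moreover have "\<forall>w\<in>(Q \<rightarrow>\<^sub>E V). 0 \<le> chn \<tau> P Q w" using chain_nonneg[OF assms(2)] by blast
  ultimately show ?thesis unfolding isd_def by simp
qed

lemma chain_spp:
  assumes "isd (P \<rightarrow>\<^sub>E V) \<tau>" "P \<noteq> {}"
  shows "spp Q (chn \<tau> P Q)"
  unfolding spp_def using chain_pos_cn[OF assms] by blast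

lemma Hn_le:
  assumes "finite P" "isd (P \<rightarrow>\<^sub>E V) \<rho>"
  shows "Hn (P \<rightarrow>\<^sub>E V) \<rho> \<le> card P * ln (card V)"
proof -
  have "Hn (P \<rightarrow>\<^sub>E V) \<rho> \<le> ln (card (P \<rightarrow>\<^sub>E V))"
    unfolding Hn_def using entropy_le[OF fin_tup[OF assms(1)]] assms(2) unfolding isd_def by blast
  also have "\<dots> = card P * ln (card V)" using card_tup[OF assms(1)] finV Vne
    by (simp add: ln_realpow)
  finally show ?thesis .
qed

lemma Lc_ge:
  assumes "finite P" "P \<noteq> {}" "isd (P \<rightarrow>\<^sub>E V) \<rho>"
  shows "ln (card V) + card P * J P \<rho> \<le> Lc P \<rho>"
proof -
  have cp: "0 < real (card P)" using assms by (simp add: card_gt_0_iff)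
  have "card P * J P \<rho> = Lc P \<rho> + Hn (P \<rightarrow>\<^sub>E V) \<rho> / card P - 2 * ln (card V)"
    unfolding J_def using cp by simp
  moreover have "Hn (P \<rightarrow>\<^sub>E V) \<rho> / card P \<le> ln (card V)"
    using Hn_le[OF assms(1,3)] cp by (simp add: divide_le_eq mult.commute)
  ultimately show ?thesis by linarith
qed


lemma chain_J:
  assumes fP: "finite P" and fQ: "finite Q" and Pne: "P \<noteq> {}" and le: "card P \<le> card Q"
    and d: "isd (P \<rightarrow>\<^sub>E V) \<tau>" and sp: "spp P \<tau>"
  shows "J P \<tau> \<le> J Q (chn \<tau> P Q)"
proof -
  define t where "t = card P"
  define s where "s = card Q"
  define \<sigma> where "\<sigma> = chn \<tau> P Q"
  define \<pi> where "\<pi> y x = \<tau> y * (if Kc y P x Q then 1 / cn y P ^ s else 0)" for y x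
  let ?Y = "P \<rightarrow>\<^sub>E V" and ?X = "Q \<rightarrow>\<^sub>E V"
  have finY: "finite ?Y" and finX: "finite ?X" using fin_tup fP fQ by auto
  have \<sigma>_eq: "\<sigma> x = (\<Sum>y\<in>?Y. \<pi> y x)" for x unfolding \<sigma>_def chn_def \<pi>_def s_def by simp
  have \<tau>nn: "\<forall>y\<in>?Y. 0 \<le> \<tau> y" using d unfolding isd_def by blast
  have \<pi>nn: "0 \<le> \<pi> y x" if "y \<in> ?Y" for y x
    unfolding \<pi>_def using \<tau>nn that by (auto intro!: mult_nonneg_nonneg simp: cn_nonneg)
  have dX: "isd ?X \<sigma>" unfolding \<sigma>_def using chain_isd[OF fQ d sp] .
  have tpos: "0 < t" unfolding t_def using fP Pne by (simp add: card_gt_0_iff)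
  have A1y: "(\<Sum>x\<in>?X. \<pi> y x * ln (\<pi> y x)) = \<tau> y * ln (\<tau> y) - s * (\<tau> y * ln (cn y P))" if y: "y \<in> ?Y" for y
  proof (cases "\<tau> y = 0")
    case True then show ?thesis unfolding \<pi>_def by simp
  next
    case False
    then have tp: "0 < \<tau> y" using \<tau>nn y by force
    then have cp: "0 < cn y P" using sp y unfolding spp_def by blast
    have "(\<Sum>x\<in>?X. \<pi> y x * ln (\<pi> y x))
        = (\<Sum>x\<in>?X. if Kc y P x Q then (\<tau> y / cn y P ^ s) * ln (\<tau> y / cn y P ^ s) else 0)"
      unfolding \<pi>_def by (rule sum.cong) auto
    also have "\<dots> = (\<tau> y / cn y P ^ s) * ln (\<tau> y / cn y P ^ s) * cn y P ^ s"
      using sum_Kc_const[OF fQ, of y P "(\<tau> y / cn y P ^ s) * ln (\<tau> y / cn y P ^ s)"] unfolding s_def by simp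
    also have "\<dots> = \<tau> y * ln (\<tau> y / cn y P ^ s)" using cp by simp
    also have "\<dots> = \<tau> y * ln (\<tau> y) - s * (\<tau> y * ln (cn y P))"
      using tp cp by (simp add: ln_div ln_realpow algebra_simps)
    finally show ?thesis .
  qed
  have A1: "(\<Sum>x\<in>?X. \<Sum>y\<in>?Y. \<pi> y x * ln (\<pi> y x)) = - Hn ?Y \<tau> - s * Lc P \<tau>"
  proof -
    have "(\<Sum>x\<in>?X. \<Sum>y\<in>?Y. \<pi> y x * ln (\<pi> y x)) = (\<Sum>y\<in>?Y. \<Sum>x\<in>?X. \<pi> y x * ln (\<pi> y x))"
      by (rule sum.swap)
    also have "\<dots> = (\<Sum>y\<in>?Y. \<tau> y * ln (\<tau> y) - s * (\<tau> y * ln (cn y P)))"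
      using A1y by (rule sum.cong[OF refl])
    also have "\<dots> = - Hn ?Y \<tau> - s * Lc P \<tau>"
      unfolding Hn_def Lc_def by (simp add: sum_subtractf sum_distrib_left)
    finally show ?thesis .
  qed
  have A3: "- (\<Sum>y\<in>?Y. \<pi> y x * ln (\<pi> y x)) \<le> - (\<sigma> x * ln (\<sigma> x)) + t * (\<sigma> x * ln (cn x Q))"
    if x: "x \<in> ?X" for x
  proof (cases "\<sigma> x = 0")
    case True
    then have "\<forall>y\<in>?Y. \<pi> y x = 0" using \<sigma>_eq[of x] \<pi>nn finY by (simp add: sum_nonneg_eq_0_iff)
    then show ?thesis using True by simp
  next
    case False
    then have sgp: "0 < \<sigma> x" using dX x unfolding isd_def by force
    have cxp: "0 < cn x Q" using chain_pos_cn[OF d Pne x _ order_refl] sgp unfolding \<sigma>_def by blast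
    define \<rho> where "\<rho> y = \<pi> y x / \<sigma> x" for y
    define f where "f y = (if Kc y P x Q then 1 else 0::real)" for y
    have \<rho>nn: "\<forall>y\<in>?Y. 0 \<le> \<rho> y" unfolding \<rho>_def using \<pi>nn sgp by simp
    have \<rho>1: "sum \<rho> ?Y = 1" unfolding \<rho>_def using sgp \<sigma>_eq[of x] by (simp add: sum_divide_distrib[symmetric])
    have fpos: "\<forall>y\<in>?Y. 0 < \<rho> y \<longrightarrow> 0 < f y"
    proof (intro ballI impI)
      fix y assume "y \<in> ?Y" "0 < \<rho> y"
      then have "0 < \<pi> y x" using sgp by (simp add: \<rho>_def zero_less_divide_iff)
      then have "Kc y P x Q" by (simp add: \<pi>_def split: if_splits)
      then show "0 < f y" by (simp add: f_def)
    qed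
    have G: "(\<Sum>y\<in>?Y. \<rho> y * ln (f y / \<rho> y)) \<le> ln (sum f ?Y)"
      by (rule gibbs[OF finY \<rho>nn \<rho>1 _ fpos]) (simp add: f_def)
    have "sum f ?Y = real (card {y \<in> ?Y. Kc x Q y P})"
    proof -
      have "sum f ?Y = real (card {y \<in> ?Y. Kc y P x Q})"
        unfolding f_def using finY by (simp add: sum.inter_filter[symmetric])
      also have "{y \<in> ?Y. Kc y P x Q} = {y \<in> ?Y. Kc x Q y P}" using Kc_sym[OF x] by blast
      finally show ?thesis .
    qed
    also have "\<dots> = cn x Q ^ t" unfolding t_def by (rule card_Kc[OF fP])
    finally have sf: "ln (sum f ?Y) = t * ln (cn x Q)" using cxp by (simp add: ln_realpow)
    have eqs: "(\<Sum>y\<in>?Y. \<pi> y x * (ln (\<sigma> x) - ln (\<pi> y x))) = \<sigma> x * (\<Sum>y\<in>?Y. \<rho> y * ln (f y / \<rho> y))"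
      unfolding sum_distrib_left
    proof (rule sum.cong[OF refl])
      fix y assume y: "y \<in> ?Y"
      show "\<pi> y x * (ln (\<sigma> x) - ln (\<pi> y x)) = \<sigma> x * (\<rho> y * ln (f y / \<rho> y))"
      proof (cases "\<pi> y x = 0")
        case True then show ?thesis unfolding \<rho>_def by simp
      next
        case False
        then have pp: "0 < \<pi> y x" using \<pi>nn[OF y, of x] by linarith
        then have "Kc y P x Q" unfolding \<pi>_def by (auto split: if_splits)
        then have f1: "f y = 1" unfolding f_def by simp
        show ?thesis unfolding f1 \<rho>_def using pp sgp by (simp add: ln_div)
      qed
    qed
    have "(\<Sum>y\<in>?Y. \<pi> y x * ln (\<sigma> x)) = \<sigma> x * ln (\<sigma> x)"
      using \<sigma>_eq[of x] by (simp add: sum_distrib_right)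
    then have "- (\<Sum>y\<in>?Y. \<pi> y x * ln (\<pi> y x)) = - (\<sigma> x * ln (\<sigma> x)) + (\<Sum>y\<in>?Y. \<pi> y x * (ln (\<sigma> x) - ln (\<pi> y x)))"
      by (simp add: algebra_simps sum_subtractf)
    also have "\<dots> \<le> - (\<sigma> x * ln (\<sigma> x)) + \<sigma> x * (t * ln (cn x Q))"
      unfolding eqs using G sf sgp by (simp add: mult_left_mono)
    finally show ?thesis by (simp add: algebra_simps)
  qed
  have A: "Hn ?Y \<tau> + s * Lc P \<tau> \<le> Hn ?X \<sigma> + t * Lc Q \<sigma>"
  proof -
    have "Hn ?Y \<tau> + s * Lc P \<tau> = (\<Sum>x\<in>?X. - (\<Sum>y\<in>?Y. \<pi> y x * ln (\<pi> y x)))"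
      using A1 by (simp add: sum_negf)
    also have "\<dots> \<le> (\<Sum>x\<in>?X. - (\<sigma> x * ln (\<sigma> x)) + t * (\<sigma> x * ln (cn x Q)))"
      using A3 by (rule sum_mono)
    also have "\<dots> = Hn ?X \<sigma> + t * Lc Q \<sigma>"
      unfolding Hn_def Lc_def by (simp add: sum.distrib sum_negf sum_distrib_left sum_subtractf)
    finally show ?thesis .
  qed
  have B1: "Hn ?X \<sigma> \<le> s * ln (card V)" unfolding s_def using Hn_le[OF fQ dX] .
  have B2: "Hn ?Y \<tau> \<le> t * ln (card V)" unfolding t_def using Hn_le[OF fP d] .
  have ts: "real t \<le> real s" unfolding t_def s_def using le by simp
  have "(Lc P \<tau> + Hn ?Y \<tau> / t - 2 * ln (card V)) / t \<le> (Lc Q \<sigma> + Hn ?X \<sigma> / s - 2 * ln (card V)) / s"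
    by (rule J_alg) (use tpos ts A B1 B2 in auto)
  then show ?thesis unfolding J_def t_def s_def \<sigma>_def .
qed

end

context sg begin

definition marg :: "'i set \<Rightarrow> 'i set \<Rightarrow> (('i \<Rightarrow> 'b) \<Rightarrow> real) \<Rightarrow> ('i \<Rightarrow> 'b) \<Rightarrow> real" where
  "marg R Q \<rho> w = (\<Sum>x\<in>(R \<rightarrow>\<^sub>E V). if restrict x Q = w then \<rho> x else 0)"

lemma restrict_in: "x \<in> (R \<rightarrow>\<^sub>E S) \<Longrightarrow> Q \<subseteq> R \<Longrightarrow> restrict x Q \<in> (Q \<rightarrow>\<^sub>E S)"
  by (simp add: restrict_PiE_iff PiE_iff subset_iff)

lemma marg_push:
  assumes "finite R" "Q \<subseteq> R"
  shows "(\<Sum>w\<in>(Q \<rightarrow>\<^sub>E V). marg R Q \<rho> w * g w) = (\<Sum>x\<in>(R \<rightarrow>\<^sub>E V). \<rho> x * g (restrict x Q))"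
proof -
  have fQ: "finite Q" using assms finite_subset by blast
  have "(\<Sum>w\<in>(Q \<rightarrow>\<^sub>E V). marg R Q \<rho> w * g w)
      = (\<Sum>w\<in>(Q \<rightarrow>\<^sub>E V). \<Sum>x\<in>(R \<rightarrow>\<^sub>E V). if restrict x Q = w then \<rho> x * g w else 0)"
    unfolding marg_def sum_distrib_right by (intro sum.cong refl) auto
  also have "\<dots> = (\<Sum>x\<in>(R \<rightarrow>\<^sub>E V). \<Sum>w\<in>(Q \<rightarrow>\<^sub>E V). if restrict x Q = w then \<rho> x * g w else 0)"
    by (rule sum.swap)
  also have "\<dots> = (\<Sum>x\<in>(R \<rightarrow>\<^sub>E V). \<rho> x * g (restrict x Q))"
  proof (rule sum.cong[OF refl])
    fix x assume x: "x \<in> (R \<rightarrow>\<^sub>E V)"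
    have "restrict x Q \<in> (Q \<rightarrow>\<^sub>E V)" using restrict_in[OF x assms(2)] .
    then show "(\<Sum>w\<in>(Q \<rightarrow>\<^sub>E V). if restrict x Q = w then \<rho> x * g w else 0) = \<rho> x * g (restrict x Q)"
      using fin_tup[OF fQ] by (simp add: sum.delta)
  qed
  finally show ?thesis .
qed

lemma marg_nonneg: "isd (R \<rightarrow>\<^sub>E V) \<rho> \<Longrightarrow> 0 \<le> marg R Q \<rho> w"
  unfolding marg_def isd_def by (intro sum_nonneg) auto

lemma marg_isd:
  assumes "finite R" "Q \<subseteq> R" "isd (R \<rightarrow>\<^sub>E V) \<rho>"
  shows "isd (Q \<rightarrow>\<^sub>E V) (marg R Q \<rho>)"
proof -
  have "(\<Sum>w\<in>(Q \<rightarrow>\<^sub>E V). marg R Q \<rho> w * 1) = (\<Sum>x\<in>(R \<rightarrow>\<^sub>E V). \<rho> x * 1)"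
    by (rule marg_push[OF assms(1,2)])
  then show ?thesis using assms(3) marg_nonneg[OF assms(3)] unfolding isd_def by simp
qed

lemma marg_pos:
  assumes "isd (R \<rightarrow>\<^sub>E V) \<rho>" "0 < marg R Q \<rho> w"
  shows "\<exists>x\<in>(R \<rightarrow>\<^sub>E V). restrict x Q = w \<and> 0 < \<rho> x"
proof (rule ccontr)
  assume "\<not> ?thesis"
  then have "\<forall>x\<in>(R \<rightarrow>\<^sub>E V). (if restrict x Q = w then \<rho> x else 0) \<le> 0" by force
  then have "marg R Q \<rho> w \<le> 0" unfolding marg_def by (intro sum_nonpos) auto
  then show False using assms(2) by simp
qed

lemma marg_spp:
  assumes "isd (R \<rightarrow>\<^sub>E V) \<rho>" "Q \<subseteq> R" "\<forall>x\<in>(R \<rightarrow>\<^sub>E V). 0 < \<rho> x \<longrightarrow> 0 < cn x Q"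
  shows "spp Q (marg R Q \<rho>)"
  unfolding spp_def
proof (intro ballI impI)
  fix w assume "w \<in> (Q \<rightarrow>\<^sub>E V)" "0 < marg R Q \<rho> w"
  then obtain x where x: "x \<in> (R \<rightarrow>\<^sub>E V)" "restrict x Q = w" "0 < \<rho> x" using marg_pos[OF assms(1)] by blast
  then have "cn w Q = cn x Q" using cn_restrict[of Q Q x] by simp
  then show "0 < cn w Q" using assms(3) x by simp
qed

lemma Lc_marg:
  assumes "finite R" "Q \<subseteq> R"
  shows "Lc Q (marg R Q \<rho>) = (\<Sum>x\<in>(R \<rightarrow>\<^sub>E V). \<rho> x * ln (cn x Q))"
  unfolding Lc_def using marg_push[OF assms, of \<rho> "\<lambda>w. ln (cn w Q)"] cn_restrict[of Q Q] by simp

lemma marg_self: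
  assumes "finite R" "x \<in> (R \<rightarrow>\<^sub>E V)"
  shows "marg R R \<rho> x = \<rho> x"
proof -
  have "marg R R \<rho> x = (\<Sum>y\<in>(R \<rightarrow>\<^sub>E V). if y = x then \<rho> y else 0)"
    unfolding marg_def by (intro sum.cong refl) auto
  also have "\<dots> = \<rho> x" using fin_tup[OF assms(1)] assms(2) by (simp add: sum.delta')
  finally show ?thesis .
qed

lemma marg_chain:
  assumes "finite R" "Q \<subseteq> R" "w \<in> (Q \<rightarrow>\<^sub>E V)" "isd (P \<rightarrow>\<^sub>E V) \<tau>" "spp P \<tau>"
  shows "marg R Q (chn \<tau> P R) w = chn \<tau> P Q w"
proof -
  have fR: "finite R" using assms by simp
  have "marg R Q (chn \<tau> P R) w
     = (\<Sum>y\<in>(P \<rightarrow>\<^sub>E V). \<tau> y * (\<Sum>x\<in>(R \<rightarrow>\<^sub>E V). if Kc y P x R \<and> restrict x Q = w then 1 / cn y P ^ card R else 0))"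
  proof -
    have "marg R Q (chn \<tau> P R) w = (\<Sum>x\<in>(R \<rightarrow>\<^sub>E V). \<Sum>y\<in>(P \<rightarrow>\<^sub>E V).
        if restrict x Q = w then \<tau> y * (if Kc y P x R then 1 / cn y P ^ card R else 0) else 0)"
      unfolding marg_def chn_def by (intro sum.cong refl) simp
    also have "\<dots> = (\<Sum>y\<in>(P \<rightarrow>\<^sub>E V). \<Sum>x\<in>(R \<rightarrow>\<^sub>E V).
        if restrict x Q = w then \<tau> y * (if Kc y P x R then 1 / cn y P ^ card R else 0) else 0)"
      by (rule sum.swap)
    also have "\<dots> = (\<Sum>y\<in>(P \<rightarrow>\<^sub>E V). \<tau> y * (\<Sum>x\<in>(R \<rightarrow>\<^sub>E V). if Kc y P x R \<and> restrict x Q = w then 1 / cn y P ^ card R else 0))"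
      unfolding sum_distrib_left by (intro sum.cong refl) simp
    finally show ?thesis .
  qed
  also have "\<dots> = (\<Sum>y\<in>(P \<rightarrow>\<^sub>E V). \<tau> y * (if Kc y P w Q then 1 / cn y P ^ card Q else 0))"
  proof (rule sum.cong[OF refl])
    fix y assume y: "y \<in> (P \<rightarrow>\<^sub>E V)"
    show "\<tau> y * (\<Sum>x\<in>(R \<rightarrow>\<^sub>E V). if Kc y P x R \<and> restrict x Q = w then 1 / cn y P ^ card R else 0)
        = \<tau> y * (if Kc y P w Q then 1 / cn y P ^ card Q else 0)"
    proof (cases "\<tau> y = 0")
      case False
      then have "0 < \<tau> y" using assms(4) y unfolding isd_def by force
      then have cp: "0 < cn y P" using assms(5) y unfolding spp_def by blast
      have "(\<Sum>x\<in>(R \<rightarrow>\<^sub>E V). if Kc y P x R \<and> restrict x Q = w then 1 / cn y P ^ card R else 0)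
          = (\<Sum>x\<in>{x \<in> (R \<rightarrow>\<^sub>E V). Kc y P x R \<and> restrict x Q = w}. 1 / cn y P ^ card R)"
        using fin_tup[OF fR] by (simp add: sum.inter_filter[symmetric])
      also have "{x \<in> (R \<rightarrow>\<^sub>E V). Kc y P x R \<and> restrict x Q = w} = {x \<in> (R \<rightarrow>\<^sub>E nb y P). restrict x Q = w}"
        using Kc_set[of R y P] by blast
      also have "(\<Sum>x\<in>{x \<in> (R \<rightarrow>\<^sub>E nb y P). restrict x Q = w}. 1 / cn y P ^ card R)
          = real (card {x \<in> (R \<rightarrow>\<^sub>E nb y P). restrict x Q = w}) * (1 / cn y P ^ card R)"
        by (rule sum_constant)
      finally have eq: "(\<Sum>x\<in>(R \<rightarrow>\<^sub>E V). if Kc y P x R \<and> restrict x Q = w then 1 / cn y P ^ card R else 0)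
          = real (card {x \<in> (R \<rightarrow>\<^sub>E nb y P). restrict x Q = w}) * (1 / cn y P ^ card R)" .
      show ?thesis
      proof (cases "Kc y P w Q")
        case True
        then have "w \<in> (Q \<rightarrow>\<^sub>E nb y P)" using Kc_set[of Q y P] assms(3) by blast
        then have "card {x \<in> (R \<rightarrow>\<^sub>E nb y P). restrict x Q = w} = card (nb y P) ^ card (R - Q)"
          using card_restrict_fiber[OF assms(2) _ fR] by blast
        then have "real (card {x \<in> (R \<rightarrow>\<^sub>E nb y P). restrict x Q = w}) = cn y P ^ card (R - Q)"
          unfolding cn_def by simp
        moreover have "card R = card (R - Q) + card Q"
          using assms(1,2) by (metis card_Diff_subset finite_subset le_add_diff_inverse2 card_mono)
        ultimately show ?thesis using eq True cp by (simp add: power_add)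
      next
        case False
        have emp: "{x \<in> (R \<rightarrow>\<^sub>E nb y P). restrict x Q = w} = {}"
        proof (rule ccontr)
          assume "\<not> ?thesis"
          then obtain x where x: "x \<in> (R \<rightarrow>\<^sub>E nb y P)" "restrict x Q = w" by blast
          then have "w \<in> (Q \<rightarrow>\<^sub>E nb y P)" using restrict_in[OF x(1) assms(2)] by simp
          then have "Kc y P w Q" using Kc_set[of Q y P] by blast
          then show False using False by simp
        qed
        show ?thesis using eq[unfolded emp] False by simp
      qed
    qed simp
  qed
  also have "\<dots> = chn \<tau> P Q w" unfolding chn_def ..
  finally show ?thesis .
qed

definition extd :: "'i set \<Rightarrow> 'i set \<Rightarrow> 'i set \<Rightarrow> (('i \<Rightarrow> 'b) \<Rightarrow> real) \<Rightarrow> ('i \<Rightarrow> 'b) \<Rightarrow> real" where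
  "extd R B P \<rho> z = \<rho> (restrict z R) * (if Kc z P z B then 1 / cn z P ^ card B else 0)"

lemma nb_merge1: "P \<subseteq> R \<Longrightarrow> nb (mrg R x y) P = nb x P"
  unfolding nb_def mrg_def by (auto simp: subset_iff)

lemma Kc_merge:
  assumes "R \<inter> B = {}" "P \<subseteq> R"
  shows "Kc (mrg R x y) P (mrg R x y) B \<longleftrightarrow> Kc x P y B"
proof -
  have "\<forall>i\<in>B. mrg R x y i = y i" using assms(1) unfolding mrg_def by auto
  then show ?thesis unfolding Kc_def nb_merge1[OF assms(2)] by simp
qed

lemma ext_merge:
  assumes "R \<inter> B = {}" "P \<subseteq> R" "x \<in> (R \<rightarrow>\<^sub>E V)"
  shows "extd R B P \<rho> (mrg R x y) = \<rho> x * (if Kc x P y B then 1 / cn x P ^ card B else 0)"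
  unfolding extd_def Kc_merge[OF assms(1,2)] restrict_merge1[OF assms(3)]
  using nb_merge1[OF assms(2)] unfolding cn_def by simp

lemma restrict_merge_sub1: "Q \<subseteq> R \<Longrightarrow> restrict (mrg R x y) Q = restrict x Q"
  unfolding mrg_def restrict_def by (auto simp: fun_eq_iff subset_iff)

lemma restrict_merge_sub2: "R \<inter> B = {} \<Longrightarrow> Q \<subseteq> B \<Longrightarrow> restrict (mrg R x y) Q = restrict y Q"
  unfolding mrg_def restrict_def by (auto simp: fun_eq_iff subset_iff)

end

locale extc = sg V E for V :: "'b set" and E :: "'b set set" +
  fixes R B P :: "'i set" and \<rho> :: "('i \<Rightarrow> 'b) \<Rightarrow> real"
  assumes disj: "R \<inter> B = {}" and fR: "finite R" and fB: "finite B" and PR: "P \<subseteq> R" and Pne: "P \<noteq> {}"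
    and d: "isd (R \<rightarrow>\<^sub>E V) \<rho>" and hP: "\<forall>x\<in>(R \<rightarrow>\<^sub>E V). 0 < \<rho> x \<longrightarrow> 0 < cn x P"
begin

lemma \<rho>nn: "x \<in> (R \<rightarrow>\<^sub>E V) \<Longrightarrow> 0 \<le> \<rho> x" using d unfolding isd_def by blast

lemma inner1: "x \<in> (R \<rightarrow>\<^sub>E V) \<Longrightarrow> \<rho> x * (\<Sum>y\<in>(B \<rightarrow>\<^sub>E V). if Kc x P y B then 1 / cn x P ^ card B else 0) = \<rho> x"
proof (cases "\<rho> x = 0")
  case False
  assume x: "x \<in> (R \<rightarrow>\<^sub>E V)"
  then have "0 < \<rho> x" using \<rho>nn False by force
  then have "0 < cn x P" using hP x by blast
  then show ?thesis using sum_Kc_one[OF fB, of x P] by simp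
qed simp

lemma ext_isd: "isd (R \<union> B \<rightarrow>\<^sub>E V) (extd R B P \<rho>)"
proof -
  have nn: "\<forall>z\<in>(R \<union> B \<rightarrow>\<^sub>E V). 0 \<le> extd R B P \<rho> z"
  proof
    fix z assume z: "z \<in> (R \<union> B \<rightarrow>\<^sub>E V)"
    have "restrict z R \<in> (R \<rightarrow>\<^sub>E V)" using restrict_in[OF z] by blast
    then show "0 \<le> extd R B P \<rho> z" unfolding extd_def using \<rho>nn by (auto intro!: mult_nonneg_nonneg simp: cn_nonneg)
  qed
  have "(\<Sum>z\<in>(R \<union> B \<rightarrow>\<^sub>E V). extd R B P \<rho> z) = (\<Sum>x\<in>(R \<rightarrow>\<^sub>E V). \<Sum>y\<in>(B \<rightarrow>\<^sub>E V). extd R B P \<rho> (mrg R x y))"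
    by (rule sum_PiE_split[OF disj fR fB])
  also have "\<dots> = (\<Sum>x\<in>(R \<rightarrow>\<^sub>E V). \<rho> x * (\<Sum>y\<in>(B \<rightarrow>\<^sub>E V). if Kc x P y B then 1 / cn x P ^ card B else 0))"
    unfolding sum_distrib_left by (intro sum.cong refl) (simp add: ext_merge[OF disj PR])
  also have "\<dots> = (\<Sum>x\<in>(R \<rightarrow>\<^sub>E V). \<rho> x)" using inner1 by (intro sum.cong refl) simp
  also have "\<dots> = 1" using d unfolding isd_def by simp
  finally show ?thesis using nn unfolding isd_def by simp
qed

lemma ext_marg1:
  assumes "Q \<subseteq> R"
  shows "marg (R \<union> B) Q (extd R B P \<rho>) w = marg R Q \<rho> w"
proof -
  have "marg (R \<union> B) Q (extd R B P \<rho>) w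
      = (\<Sum>x\<in>(R \<rightarrow>\<^sub>E V). \<Sum>y\<in>(B \<rightarrow>\<^sub>E V). if restrict (mrg R x y) Q = w then extd R B P \<rho> (mrg R x y) else 0)"
    unfolding marg_def by (rule sum_PiE_split[OF disj fR fB])
  also have "\<dots> = (\<Sum>x\<in>(R \<rightarrow>\<^sub>E V). if restrict x Q = w then \<rho> x * (\<Sum>y\<in>(B \<rightarrow>\<^sub>E V). if Kc x P y B then 1 / cn x P ^ card B else 0) else 0)"
  proof (rule sum.cong[OF refl])
    fix x assume x: "x \<in> (R \<rightarrow>\<^sub>E V)"
    show "(\<Sum>y\<in>(B \<rightarrow>\<^sub>E V). if restrict (mrg R x y) Q = w then extd R B P \<rho> (mrg R x y) else 0)
       = (if restrict x Q = w then \<rho> x * (\<Sum>y\<in>(B \<rightarrow>\<^sub>E V). if Kc x P y B then 1 / cn x P ^ card B else 0) else 0)"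
      unfolding restrict_merge_sub1[OF assms] ext_merge[OF disj PR x] sum_distrib_left by simp
  qed
  also have "\<dots> = marg R Q \<rho> w" unfolding marg_def using inner1 by (intro sum.cong refl) simp
  finally show ?thesis .
qed

lemma ext_marg2:
  assumes "Q \<subseteq> B" "w \<in> (Q \<rightarrow>\<^sub>E V)"
  shows "marg (R \<union> B) Q (extd R B P \<rho>) w = chn (marg R P \<rho>) P Q w"
proof -
  have fQ: "finite Q" using assms fB finite_subset by blast
  have "marg (R \<union> B) Q (extd R B P \<rho>) w
      = (\<Sum>x\<in>(R \<rightarrow>\<^sub>E V). \<Sum>y\<in>(B \<rightarrow>\<^sub>E V). if restrict (mrg R x y) Q = w then extd R B P \<rho> (mrg R x y) else 0)"
    unfolding marg_def by (rule sum_PiE_split[OF disj fR fB])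
  also have "\<dots> = (\<Sum>x\<in>(R \<rightarrow>\<^sub>E V). \<rho> x * (if Kc x P w Q then 1 / cn x P ^ card Q else 0))"
  proof (rule sum.cong[OF refl])
    fix x assume x: "x \<in> (R \<rightarrow>\<^sub>E V)"
    have "(\<Sum>y\<in>(B \<rightarrow>\<^sub>E V). if restrict (mrg R x y) Q = w then extd R B P \<rho> (mrg R x y) else 0)
        = \<rho> x * (\<Sum>y\<in>(B \<rightarrow>\<^sub>E V). if Kc x P y B \<and> restrict y Q = w then 1 / cn x P ^ card B else 0)"
      unfolding restrict_merge_sub2[OF disj assms(1)] ext_merge[OF disj PR x] sum_distrib_left
      by (intro sum.cong refl) simp
    also have "\<dots> = \<rho> x * (if Kc x P w Q then 1 / cn x P ^ card Q else 0)"
    proof (cases "\<rho> x = 0")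
      case False
      then have "0 < \<rho> x" using \<rho>nn[OF x] by force
      then have cp: "0 < cn x P" using hP x by blast
      have "(\<Sum>y\<in>(B \<rightarrow>\<^sub>E V). if Kc x P y B \<and> restrict y Q = w then 1 / cn x P ^ card B else 0)
          = (\<Sum>y\<in>{y \<in> (B \<rightarrow>\<^sub>E V). Kc x P y B \<and> restrict y Q = w}. 1 / cn x P ^ card B)"
        using fin_tup[OF fB] by (simp add: sum.inter_filter[symmetric])
      also have "{y \<in> (B \<rightarrow>\<^sub>E V). Kc x P y B \<and> restrict y Q = w} = {y \<in> (B \<rightarrow>\<^sub>E nb x P). restrict y Q = w}"
        using Kc_set[of B x P] by blast
      also have "(\<Sum>y\<in>{y \<in> (B \<rightarrow>\<^sub>E nb x P). restrict y Q = w}. 1 / cn x P ^ card B)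
          = real (card {y \<in> (B \<rightarrow>\<^sub>E nb x P). restrict y Q = w}) * (1 / cn x P ^ card B)"
        by (rule sum_constant)
      finally have eq: "(\<Sum>y\<in>(B \<rightarrow>\<^sub>E V). if Kc x P y B \<and> restrict y Q = w then 1 / cn x P ^ card B else 0)
          = real (card {y \<in> (B \<rightarrow>\<^sub>E nb x P). restrict y Q = w}) * (1 / cn x P ^ card B)" .
      show ?thesis
      proof (cases "Kc x P w Q")
        case True
        then have "w \<in> (Q \<rightarrow>\<^sub>E nb x P)" using Kc_set[of Q x P] assms(2) by blast
        then have "card {y \<in> (B \<rightarrow>\<^sub>E nb x P). restrict y Q = w} = card (nb x P) ^ card (B - Q)"
          using card_restrict_fiber[OF assms(1) _ fB] by blast
        then have "real (card {y \<in> (B \<rightarrow>\<^sub>E nb x P). restrict y Q = w}) = cn x P ^ card (B - Q)"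
          unfolding cn_def by simp
        moreover have "card B = card (B - Q) + card Q"
          using fB assms(1) by (metis card_Diff_subset finite_subset le_add_diff_inverse2 card_mono)
        ultimately show ?thesis using eq True cp by (simp add: power_add)
      next
        case False
        have emp: "{y \<in> (B \<rightarrow>\<^sub>E nb x P). restrict y Q = w} = {}"
        proof (rule ccontr)
          assume "\<not> ?thesis"
          then obtain y where y: "y \<in> (B \<rightarrow>\<^sub>E nb x P)" "restrict y Q = w" by blast
          then have "w \<in> (Q \<rightarrow>\<^sub>E nb x P)" using restrict_in[OF y(1) assms(1)] by simp
          then have "Kc x P w Q" using Kc_set[of Q x P] by blast
          then show False using False by simp
        qed
        show ?thesis using eq[unfolded emp] False by simp
      qed
    qed simp
    finally show "(\<Sum>y\<in>(B \<rightarrow>\<^sub>E V). if restrict (mrg R x y) Q = w then extd R B P \<rho> (mrg R x y) else 0)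
        = \<rho> x * (if Kc x P w Q then 1 / cn x P ^ card Q else 0)" .
  qed
  also have "\<dots> = chn (marg R P \<rho>) P Q w"
  proof -
    have "chn (marg R P \<rho>) P Q w = (\<Sum>u\<in>(P \<rightarrow>\<^sub>E V). marg R P \<rho> u * (if Kc u P w Q then 1 / cn u P ^ card Q else 0))"
      unfolding chn_def ..
    also have "\<dots> = (\<Sum>x\<in>(R \<rightarrow>\<^sub>E V). \<rho> x * (if Kc (restrict x P) P w Q then 1 / cn (restrict x P) P ^ card Q else 0))"
      by (rule marg_push[OF fR PR])
    also have "\<dots> = (\<Sum>x\<in>(R \<rightarrow>\<^sub>E V). \<rho> x * (if Kc x P w Q then 1 / cn x P ^ card Q else 0))"
      unfolding Kc_def nb_restrict[OF order_refl] cn_restrict[OF order_refl] ..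
    finally show ?thesis by simp
  qed
  finally show ?thesis .
qed

lemma ext_pos:
  assumes "z \<in> (R \<union> B \<rightarrow>\<^sub>E V)" "0 < extd R B P \<rho> z"
  shows "0 < \<rho> (restrict z R) \<and> Kc z P z B"
proof -
  have "restrict z R \<in> (R \<rightarrow>\<^sub>E V)" using restrict_in[OF assms(1)] by blast
  then have "0 \<le> \<rho> (restrict z R)" using \<rho>nn by blast
  then show ?thesis using assms(2) unfolding extd_def
    by (cases "Kc z P z B") (auto simp: zero_less_mult_iff zero_less_divide_iff)
qed

end

fun wfb :: "'a set \<Rightarrow> ('a set \<times> 'a set) list \<Rightarrow> bool" where
  "wfb R [] = finite R"
| "wfb R ((B,P)#bs) = (finite R \<and> finite B \<and> R \<inter> B = {} \<and> P \<noteq> {} \<and> P \<subseteq> R \<and>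
     (\<forall>(B',P')\<in>set bs. P' \<subseteq> R \<union> B \<longrightarrow> P' \<subseteq> R \<or> (P' \<subseteq> B \<and> card P \<le> card P')) \<and> wfb (R \<union> B) bs)"

fun tv :: "('a set \<times> 'a set) list \<Rightarrow> real" where
  "tv [] = 0"
| "tv ((B,P)#bs) = card B + tv bs"

fun te :: "('a set \<times> 'a set) list \<Rightarrow> real" where
  "te [] = 0"
| "te ((B,P)#bs) = card B * card P + te bs"

lemma merge_restrict:
  assumes "z \<in> (R \<union> B \<rightarrow>\<^sub>E S)"
  shows "mrg R (restrict z R) (restrict z B) = z"
proof
  fix i show "mrg R (restrict z R) (restrict z B) i = z i"
    unfolding mrg_def using PiE_arb[OF assms, of i] by auto
qed

context sg begin

fun F :: "'i set \<Rightarrow> ('i set \<times> 'i set) list \<Rightarrow> ('i \<Rightarrow> 'b) \<Rightarrow> real" where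
  "F R [] x = 1"
| "F R ((B,P)#bs) x = (\<Sum>y\<in>(B \<rightarrow>\<^sub>E V). if Kc x P y B then F (R \<union> B) bs (mrg R x y) else 0)"

definition topc :: "'i set \<Rightarrow> ('i set \<times> 'i set) list \<Rightarrow> ('i \<Rightarrow> 'b) \<Rightarrow> bool" where
  "topc R bs x \<longleftrightarrow> (\<forall>(B',P')\<in>set bs. P' \<subseteq> R \<longrightarrow> 0 < cn x P')"

lemma F_nonneg: "0 \<le> F R bs x"
  by (induction R bs x rule: F.induct) (auto intro: sum_nonneg)

lemma top_step:
  assumes wfb: "wfb R ((B,P)#bs)" and x: "x \<in> (R \<rightarrow>\<^sub>E V)" and tp: "topc R ((B,P)#bs) x"
    and y: "y \<in> (B \<rightarrow>\<^sub>E V)" and K: "Kc x P y B"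
  shows "topc (R \<union> B) bs (mrg R x y)"
  unfolding topc_def
proof (intro ballI impI, clarify)
  fix B' P' assume mem: "(B', P') \<in> set bs" and sub: "P' \<subseteq> R \<union> B"
  from wfb have disj: "R \<inter> B = {}" and Pne: "P \<noteq> {}" and PR: "P \<subseteq> R" by auto
  from wfb mem sub have cases: "P' \<subseteq> R \<or> P' \<subseteq> B" by fastforce
  show "0 < cn (mrg R x y) P'"
  proof (cases "P' \<subseteq> R")
    case True
    then have "cn (mrg R x y) P' = cn x P'" unfolding cn_def using nb_merge1[of P' R x y] by simp
    moreover have "0 < cn x P'" using tp mem True unfolding topc_def by fastforce
    ultimately show ?thesis by simp
  next
    case False
    then have PB: "P' \<subseteq> B" using cases by blast
    obtain j where j: "j \<in> P" using Pne by blast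
    have "x j \<in> nb (mrg R x y) P'"
    proof -
      have xj: "x j \<in> V" using x j PR by (auto simp: PiE_iff)
      have "\<forall>i\<in>P'. {x j, mrg R x y i} \<in> E"
      proof
        fix i assume i: "i \<in> P'"
        then have iB: "i \<in> B" using PB by blast
        then have "mrg R x y i = y i" using disj unfolding mrg_def by auto
        moreover have "y i \<in> nb x P" using K iB unfolding Kc_def by blast
        ultimately show "{x j, mrg R x y i} \<in> E" using j unfolding nb_def by (auto simp: insert_commute)
      qed
      then show ?thesis using xj unfolding nb_def by blast
    qed
    then have "nb (mrg R x y) P' \<noteq> {}" by blast
    then show ?thesis unfolding cn_def using fin_nb by (simp add: card_gt_0_iff)
  qed
qed

lemma F_pos: "wfb R bs \<Longrightarrow> x \<in> (R \<rightarrow>\<^sub>E V) \<Longrightarrow> topc R bs x \<Longrightarrow> 0 < F R bs x"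
proof (induction R bs x rule: F.induct)
  case (1 R x) then show ?case by simp
next
  case (2 R B P bs x)
  have PR: "P \<subseteq> R" and fB: "finite B" using "2.prems" by auto
  have "0 < cn x P" using "2.prems"(3) PR unfolding topc_def by auto
  then have "nb x P \<noteq> {}" unfolding cn_def by auto
  then obtain w where w: "w \<in> nb x P" by blast
  then have wV: "w \<in> V" using nb_sub by blast
  define y where "y = (\<lambda>i\<in>B. w)"
  have y: "y \<in> (B \<rightarrow>\<^sub>E V)" unfolding y_def using wV by simp
  have K: "Kc x P y B" unfolding Kc_def y_def using w by simp
  have tp: "topc (R \<union> B) bs (mrg R x y)" by (rule top_step[OF "2.prems"(1,2,3) y K])
  have m: "mrg R x y \<in> (R \<union> B \<rightarrow>\<^sub>E V)" by (rule merge_PiE[OF "2.prems"(2) y])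
  have "0 < F (R \<union> B) bs (mrg R x y)" using "2.IH"[OF y K] "2.prems"(1) m tp by simp
  then show ?case
    using fin_tup[OF fB] y K F_nonneg by (simp, intro sum_pos2[where i = y]) auto
qed

lemma J_cong: "(\<And>w. w \<in> (P \<rightarrow>\<^sub>E V) \<Longrightarrow> f w = g w) \<Longrightarrow> J P f = J P g"
  unfolding J_def Lc_def Hn_def by (simp cong: sum.cong)

lemma isd_cong: "(\<And>w. w \<in> S \<Longrightarrow> f w = g w) \<Longrightarrow> isd S f = isd S g"
  unfolding isd_def by (simp cong: sum.cong)

lemma spp_cong: "(\<And>w. w \<in> (P \<rightarrow>\<^sub>E V) \<Longrightarrow> f w = g w) \<Longrightarrow> spp P f = spp P g"
  unfolding spp_def by simp

lemma E_step:
  assumes wfb: "wfb R ((B,P)#bs)" and d: "isd (R \<rightarrow>\<^sub>E V) \<rho>"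
    and tp: "\<forall>x\<in>(R \<rightarrow>\<^sub>E V). 0 < \<rho> x \<longrightarrow> topc R ((B,P)#bs) x"
  shows "card B * Lc P (marg R P \<rho>) + (\<Sum>z\<in>(R \<union> B \<rightarrow>\<^sub>E V). extd R B P \<rho> z * ln (F (R \<union> B) bs z))
         \<le> (\<Sum>x\<in>(R \<rightarrow>\<^sub>E V). \<rho> x * ln (F R ((B,P)#bs) x))"
proof -
  have disj: "R \<inter> B = {}" and fR: "finite R" and fB: "finite B" and PR: "P \<subseteq> R" and Pne: "P \<noteq> {}"
    using wfb by auto
  have hP: "\<forall>x\<in>(R \<rightarrow>\<^sub>E V). 0 < \<rho> x \<longrightarrow> 0 < cn x P" using tp PR unfolding topc_def by auto
  interpret extc V E R B P \<rho> by unfold_locales (use disj fR fB PR Pne d hP in auto)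
  define q where "q x y = (if Kc x P y B then 1 / cn x P ^ card B else 0)" for x y
  have per_x: "\<rho> x * ((\<Sum>y\<in>(B \<rightarrow>\<^sub>E V). q x y * ln (F (R \<union> B) bs (mrg R x y))) + card B * ln (cn x P))
      \<le> \<rho> x * ln (F R ((B,P)#bs) x)" if x: "x \<in> (R \<rightarrow>\<^sub>E V)" for x
  proof (cases "\<rho> x = 0")
    case False
    then have rp: "0 < \<rho> x" using \<rho>nn[OF x] by force
    then have cp: "0 < cn x P" using hP x by blast
    have tpx: "topc R ((B,P)#bs) x" using tp x rp by blast
    define f where "f y = (if Kc x P y B then F (R \<union> B) bs (mrg R x y) else 0)" for y
    have qnn: "\<forall>y\<in>(B \<rightarrow>\<^sub>E V). 0 \<le> q x y" unfolding q_def using cn_nonneg[of x P] by simp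
    have q1: "sum (q x) (B \<rightarrow>\<^sub>E V) = 1" unfolding q_def using sum_Kc_one[OF fB cp] .
    have Fp: "0 < F (R \<union> B) bs (mrg R x y)" if "y \<in> (B \<rightarrow>\<^sub>E V)" "Kc x P y B" for y
      using F_pos[OF _ merge_PiE[OF x that(1)] top_step[OF wfb x tpx that]] wfb by simp
    have fpos: "\<forall>y\<in>(B \<rightarrow>\<^sub>E V). 0 < q x y \<longrightarrow> 0 < f y"
      unfolding q_def f_def using Fp by auto
    have G: "(\<Sum>y\<in>(B \<rightarrow>\<^sub>E V). q x y * ln (f y / q x y)) \<le> ln (sum f (B \<rightarrow>\<^sub>E V))"
      by (rule gibbs[OF fin_tup[OF fB] qnn q1 _ fpos]) (simp add: f_def F_nonneg)
    have sf: "sum f (B \<rightarrow>\<^sub>E V) = F R ((B,P)#bs) x" unfolding f_def by simp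
    have "(\<Sum>y\<in>(B \<rightarrow>\<^sub>E V). q x y * ln (f y / q x y))
        = (\<Sum>y\<in>(B \<rightarrow>\<^sub>E V). q x y * ln (F (R \<union> B) bs (mrg R x y)) + q x y * (card B * ln (cn x P)))"
    proof (rule sum.cong[OF refl])
      fix y assume y: "y \<in> (B \<rightarrow>\<^sub>E V)"
      show "q x y * ln (f y / q x y) = q x y * ln (F (R \<union> B) bs (mrg R x y)) + q x y * (card B * ln (cn x P))"
      proof (cases "Kc x P y B")
        case True
        have "f y / q x y = F (R \<union> B) bs (mrg R x y) * cn x P ^ card B"
          unfolding f_def q_def using True by simp
        then have "ln (f y / q x y) = ln (F (R \<union> B) bs (mrg R x y)) + card B * ln (cn x P)"
          using Fp[OF y True] cp by (simp add: ln_mult ln_realpow)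
        then show ?thesis by (simp add: algebra_simps)
      qed (simp add: q_def)
    qed
    also have "\<dots> = (\<Sum>y\<in>(B \<rightarrow>\<^sub>E V). q x y * ln (F (R \<union> B) bs (mrg R x y))) + card B * ln (cn x P)"
      using q1 by (simp add: sum.distrib sum_distrib_right[symmetric])
    finally have "(\<Sum>y\<in>(B \<rightarrow>\<^sub>E V). q x y * ln (F (R \<union> B) bs (mrg R x y))) + card B * ln (cn x P)
        \<le> ln (F R ((B,P)#bs) x)" using G sf by simp
    then show ?thesis using rp by (simp add: mult_left_mono)
  qed simp
  have "card B * Lc P (marg R P \<rho>) + (\<Sum>z\<in>(R \<union> B \<rightarrow>\<^sub>E V). extd R B P \<rho> z * ln (F (R \<union> B) bs z))
      = (\<Sum>x\<in>(R \<rightarrow>\<^sub>E V). \<rho> x * ((\<Sum>y\<in>(B \<rightarrow>\<^sub>E V). q x y * ln (F (R \<union> B) bs (mrg R x y))) + card B * ln (cn x P)))"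
  proof -
    have "(\<Sum>z\<in>(R \<union> B \<rightarrow>\<^sub>E V). extd R B P \<rho> z * ln (F (R \<union> B) bs z))
        = (\<Sum>x\<in>(R \<rightarrow>\<^sub>E V). \<Sum>y\<in>(B \<rightarrow>\<^sub>E V). extd R B P \<rho> (mrg R x y) * ln (F (R \<union> B) bs (mrg R x y)))"
      by (rule sum_PiE_split[OF disj fR fB])
    also have "\<dots> = (\<Sum>x\<in>(R \<rightarrow>\<^sub>E V). \<rho> x * (\<Sum>y\<in>(B \<rightarrow>\<^sub>E V). q x y * ln (F (R \<union> B) bs (mrg R x y))))"
      unfolding sum_distrib_left
      by (intro sum.cong refl) (simp add: ext_merge[OF disj PR] q_def)
    finally have e1: "(\<Sum>z\<in>(R \<union> B \<rightarrow>\<^sub>E V). extd R B P \<rho> z * ln (F (R \<union> B) bs z))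
        = (\<Sum>x\<in>(R \<rightarrow>\<^sub>E V). \<rho> x * (\<Sum>y\<in>(B \<rightarrow>\<^sub>E V). q x y * ln (F (R \<union> B) bs (mrg R x y))))" .
    have e2: "card B * Lc P (marg R P \<rho>) = (\<Sum>x\<in>(R \<rightarrow>\<^sub>E V). \<rho> x * (card B * ln (cn x P)))"
      unfolding Lc_marg[OF fR PR] sum_distrib_left by (simp add: algebra_simps)
    show ?thesis unfolding e1 e2 by (simp add: sum.distrib distrib_left)
  qed
  also have "\<dots> \<le> (\<Sum>x\<in>(R \<rightarrow>\<^sub>E V). \<rho> x * ln (F R ((B,P)#bs) x))"
    using per_x by (intro sum_mono) auto
  finally show ?thesis .
qed

lemma step_facts:
  fixes lam :: real
  assumes wfb: "wfb R ((B,P)#bs)" and d: "isd (R \<rightarrow>\<^sub>E V) \<rho>"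
    and tp: "\<forall>x\<in>(R \<rightarrow>\<^sub>E V). 0 < \<rho> x \<longrightarrow> topc R ((B,P)#bs) x"
    and Jh: "\<forall>(B',P')\<in>set ((B,P)#bs). P' \<subseteq> R \<longrightarrow> lam \<le> J P' (marg R P' \<rho>)"
  shows "isd (R \<union> B \<rightarrow>\<^sub>E V) (extd R B P \<rho>)"
    and "\<forall>z\<in>(R \<union> B \<rightarrow>\<^sub>E V). 0 < extd R B P \<rho> z \<longrightarrow> topc (R \<union> B) bs z"
    and "\<forall>(B',P')\<in>set bs. P' \<subseteq> R \<union> B \<longrightarrow> lam \<le> J P' (marg (R \<union> B) P' (extd R B P \<rho>))"
    and "ln (card V) + card P * lam \<le> Lc P (marg R P \<rho>)"
proof -
  have disj: "R \<inter> B = {}" and fR: "finite R" and fB: "finite B" and PR: "P \<subseteq> R" and Pne: "P \<noteq> {}"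
    and wfc: "\<forall>(B',P')\<in>set bs. P' \<subseteq> R \<union> B \<longrightarrow> P' \<subseteq> R \<or> (P' \<subseteq> B \<and> card P \<le> card P')"
    using wfb by auto
  have fP: "finite P" using PR fR finite_subset by blast
  have hP: "\<forall>x\<in>(R \<rightarrow>\<^sub>E V). 0 < \<rho> x \<longrightarrow> 0 < cn x P" using tp PR unfolding topc_def by auto
  interpret extc V E R B P \<rho> by unfold_locales (use disj fR fB PR Pne d hP in auto)
  let ?\<rho>' = "extd R B P \<rho>"
  show "isd (R \<union> B \<rightarrow>\<^sub>E V) ?\<rho>'" by (rule ext_isd)
  show "\<forall>z\<in>(R \<union> B \<rightarrow>\<^sub>E V). 0 < ?\<rho>' z \<longrightarrow> topc (R \<union> B) bs z"
  proof (intro ballI impI)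
    fix z assume z: "z \<in> (R \<union> B \<rightarrow>\<^sub>E V)" and pz: "0 < ?\<rho>' z"
    have zR: "restrict z R \<in> (R \<rightarrow>\<^sub>E V)" and zB: "restrict z B \<in> (B \<rightarrow>\<^sub>E V)"
      using restrict_in[OF z] by auto
    have mz: "mrg R (restrict z R) (restrict z B) = z" by (rule merge_restrict[OF z])
    from ext_pos[OF z pz] have r: "0 < \<rho> (restrict z R)" and K: "Kc z P z B" by auto
    have K': "Kc (restrict z R) P (restrict z B) B"
      using K Kc_merge[OF disj PR, of "restrict z R" "restrict z B"] mz by simp
    have "topc (R \<union> B) bs (mrg R (restrict z R) (restrict z B))"
      by (rule top_step[OF wfb zR _ zB K']) (use tp zR r in blast)
    then show "topc (R \<union> B) bs z" using mz by simp
  qed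
  show "\<forall>(B',P')\<in>set bs. P' \<subseteq> R \<union> B \<longrightarrow> lam \<le> J P' (marg (R \<union> B) P' ?\<rho>')"
  proof (intro ballI impI, clarify)
    fix B' P' assume mem: "(B', P') \<in> set bs" and sub: "P' \<subseteq> R \<union> B"
    have "P' \<subseteq> R \<or> (P' \<subseteq> B \<and> card P \<le> card P')" using wfc mem sub by fastforce
    then show "lam \<le> J P' (marg (R \<union> B) P' ?\<rho>')"
    proof
      assume P'R: "P' \<subseteq> R"
      have "J P' (marg (R \<union> B) P' ?\<rho>') = J P' (marg R P' \<rho>)"
        by (rule J_cong) (rule ext_marg1[OF P'R])
      moreover have "lam \<le> J P' (marg R P' \<rho>)" using Jh mem P'R by auto
      ultimately show ?thesis by simp
    next
      assume h: "P' \<subseteq> B \<and> card P \<le> card P'"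
      have fP': "finite P'" using h fB finite_subset by blast
      have "J P' (marg (R \<union> B) P' ?\<rho>') = J P' (chn (marg R P \<rho>) P P')"
        by (rule J_cong) (rule ext_marg2, use h in auto)
      moreover have "J P (marg R P \<rho>) \<le> J P' (chn (marg R P \<rho>) P P')"
        by (rule chain_J[OF fP fP' Pne]) (use h marg_isd[OF fR PR d] marg_spp[OF d PR hP] in auto)
      moreover have "lam \<le> J P (marg R P \<rho>)" using Jh PR by auto
      ultimately show ?thesis by simp
    qed
  qed
  show "ln (card V) + card P * lam \<le> Lc P (marg R P \<rho>)"
  proof -
    have "ln (card V) + card P * J P (marg R P \<rho>) \<le> Lc P (marg R P \<rho>)"
      by (rule Lc_ge[OF fP Pne marg_isd[OF fR PR d]])
    moreover have "lam \<le> J P (marg R P \<rho>)" using Jh PR by auto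
    ultimately show ?thesis by (smt (verit) mult_left_mono of_nat_0_le_iff)
  qed
qed

lemma claim:
  "wfb R bs \<Longrightarrow> isd (R \<rightarrow>\<^sub>E V) \<rho> \<Longrightarrow> (\<forall>x\<in>(R \<rightarrow>\<^sub>E V). 0 < \<rho> x \<longrightarrow> topc R bs x)
   \<Longrightarrow> (\<forall>(B,P)\<in>set bs. P \<subseteq> R \<longrightarrow> lam \<le> J P (marg R P \<rho>))
   \<Longrightarrow> tv bs * ln (card V) + te bs * lam \<le> (\<Sum>x\<in>(R \<rightarrow>\<^sub>E V). \<rho> x * ln (F R bs x))"
proof (induction bs arbitrary: R \<rho>)
  case Nil then show ?case by simp
next
  case (Cons p bs)
  obtain B P where p: "p = (B, P)" by (cases p)
  have wfb: "wfb R ((B,P)#bs)" using Cons.prems p by simp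
  have d: "isd (R \<rightarrow>\<^sub>E V) \<rho>" using Cons.prems by simp
  have tp: "\<forall>x\<in>(R \<rightarrow>\<^sub>E V). 0 < \<rho> x \<longrightarrow> topc R ((B,P)#bs) x" using Cons.prems p by simp
  have Jh: "\<forall>(B',P')\<in>set ((B,P)#bs). P' \<subseteq> R \<longrightarrow> lam \<le> J P' (marg R P' \<rho>)" using Cons.prems p by simp
  have wfb': "wfb (R \<union> B) bs" using wfb by simp
  note sf = step_facts[OF wfb d tp Jh]
  let ?\<rho>' = "extd R B P \<rho>"
  have IH: "tv bs * ln (card V) + te bs * lam \<le> (\<Sum>z\<in>(R \<union> B \<rightarrow>\<^sub>E V). ?\<rho>' z * ln (F (R \<union> B) bs z))"
    by (rule Cons.IH[OF wfb' sf(1,2,3)])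
  have "card B * (ln (card V) + card P * lam) \<le> card B * Lc P (marg R P \<rho>)"
    using sf(4) by (simp add: mult_left_mono)
  then have "tv ((B,P)#bs) * ln (card V) + te ((B,P)#bs) * lam
      \<le> card B * Lc P (marg R P \<rho>) + (\<Sum>z\<in>(R \<union> B \<rightarrow>\<^sub>E V). ?\<rho>' z * ln (F (R \<union> B) bs z))"
    using IH by (simp add: algebra_simps)
  also have "\<dots> \<le> (\<Sum>x\<in>(R \<rightarrow>\<^sub>E V). \<rho> x * ln (F R ((B,P)#bs) x))"
    by (rule E_step[OF wfb d tp])
  finally show ?case using p by simp
qed

end

definition TV :: "('a set \<times> 'a set) list \<Rightarrow> 'a set" where
  "TV bs = \<Union>(fst ` set bs)"
definition EJ :: "('a set \<times> 'a set) list \<Rightarrow> 'a set set" where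
  "EJ bs = \<Union>((\<lambda>(B,P). join_edges B P) ` set bs)"

lemma TV_Cons[simp]: "TV ((B,P)#bs) = B \<union> TV bs" unfolding TV_def by auto
lemma TV_Nil[simp]: "TV [] = {}" unfolding TV_def by auto
lemma EJ_Cons[simp]: "EJ ((B,P)#bs) = join_edges B P \<union> EJ bs" unfolding EJ_def by auto
lemma EJ_Nil[simp]: "EJ [] = {}" unfolding EJ_def by auto

lemma card_TV: "wfb R bs \<Longrightarrow> real (card (R \<union> TV bs)) \<le> card R + tv bs"
proof (induction bs arbitrary: R)
  case Nil then show ?case by simp
next
  case (Cons p bs)
  obtain B P where p: "p = (B,P)" by (cases p)
  have wfb': "wfb (R \<union> B) bs" using Cons.prems p by simp
  have "R \<union> TV (p#bs) = (R \<union> B) \<union> TV bs" using p by auto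
  then have "real (card (R \<union> TV (p#bs))) \<le> card (R \<union> B) + tv bs" using Cons.IH[OF wfb'] by simp
  also have "real (card (R \<union> B)) \<le> card R + card B" using card_Un_le[of R B] by linarith
  finally show ?case using p by simp
qed

lemma join_edges_img: "join_edges B P = (\<lambda>(u,v). {u,v}) ` (B \<times> P)"
  unfolding join_edges_def by auto

lemma card_EJ: "wfb R bs \<Longrightarrow> real (card (EJ bs)) \<le> te bs"
proof (induction bs arbitrary: R)
  case Nil then show ?case by simp
next
  case (Cons p bs)
  obtain B P where p: "p = (B,P)" by (cases p)
  have wfb': "wfb (R \<union> B) bs" using Cons.prems p by simp
  have fB: "finite B" and fP: "finite P" using Cons.prems p finite_subset by auto
  have "card (join_edges B P) \<le> card (B \<times> P)"
    unfolding join_edges_img using fB fP by (intro card_image_le) simp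
  then have j: "card (join_edges B P) \<le> card B * card P" by (simp add: card_cartesian_product)
  have "card (EJ (p#bs)) \<le> card (join_edges B P) + card (EJ bs)" using p card_Un_le by simp
  then have "real (card (EJ (p#bs))) \<le> real (card B * card P) + card (EJ bs)" using j by linarith
  also have "\<dots> \<le> card B * card P + te bs" using Cons.IH[OF wfb'] by simp
  finally show ?case using p by simp
qed

context sg begin

definition okE :: "('i set \<times> 'i set) list \<Rightarrow> ('i \<Rightarrow> 'b) \<Rightarrow> bool" where
  "okE bs \<phi> \<longleftrightarrow> (\<forall>(B,P)\<in>set bs. \<forall>i\<in>B. \<forall>j\<in>P. {\<phi> i, \<phi> j} \<in> E)"

lemma okE_iff: "(\<forall>u v. {u,v} \<in> EJ bs \<longrightarrow> {\<phi> u, \<phi> v} \<in> E) \<longleftrightarrow> okE bs \<phi>"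
proof
  assume h: "\<forall>u v. {u,v} \<in> EJ bs \<longrightarrow> {\<phi> u, \<phi> v} \<in> E"
  show "okE bs \<phi>" unfolding okE_def
  proof (intro ballI, clarify)
    fix B P i j assume "(B,P) \<in> set bs" "i \<in> B" "j \<in> P"
    then have "{i,j} \<in> EJ bs" unfolding EJ_def join_edges_def by blast
    then show "{\<phi> i, \<phi> j} \<in> E" using h by blast
  qed
next
  assume h: "okE bs \<phi>"
  show "\<forall>u v. {u,v} \<in> EJ bs \<longrightarrow> {\<phi> u, \<phi> v} \<in> E"
  proof (intro allI impI)
    fix u v assume "{u,v} \<in> EJ bs"
    then obtain B P i j where mem: "(B,P) \<in> set bs" "i \<in> B" "j \<in> P" "{u,v} = {i,j}"
      unfolding EJ_def join_edges_def by blast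
    then have e: "{\<phi> i, \<phi> j} \<in> E" using h unfolding okE_def by blast
    from mem(4) have "(u = i \<and> v = j) \<or> (u = j \<and> v = i)" by (auto simp: doubleton_eq_iff)
    then show "{\<phi> u, \<phi> v} \<in> E" using e by (auto simp: insert_commute)
  qed
qed

lemma F_count:
  "wfb R bs \<Longrightarrow> (\<Sum>x\<in>(R \<rightarrow>\<^sub>E V). if Qp x then F R bs x else 0)
     = real (card {\<phi> \<in> (R \<union> TV bs \<rightarrow>\<^sub>E V). Qp (restrict \<phi> R) \<and> okE bs \<phi>})"
proof (induction bs arbitrary: R Qp)
  case Nil
  have fR: "finite R" using Nil by simp
  have e1: "{\<phi> \<in> (R \<union> TV [] \<rightarrow>\<^sub>E V). Qp (restrict \<phi> R) \<and> okE [] \<phi>} = {x \<in> (R \<rightarrow>\<^sub>E V). Qp x}"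
    unfolding okE_def by auto
  have e2: "(\<Sum>x\<in>(R \<rightarrow>\<^sub>E V). if Qp x then F R [] x else 0) = real (card {x \<in> (R \<rightarrow>\<^sub>E V). Qp x})"
    using fin_tup[OF fR] by (simp add: sum.inter_filter[symmetric])
  show ?case unfolding e1 by (rule e2)
next
  case (Cons p bs)
  obtain B P where p: "p = (B,P)" by (cases p)
  have wfb: "wfb R ((B,P)#bs)" using Cons.prems p by simp
  have disj: "R \<inter> B = {}" and fR: "finite R" and fB: "finite B" and PR: "P \<subseteq> R" and wfb': "wfb (R \<union> B) bs"
    using wfb by auto
  define Qp' where "Qp' z = (Qp (restrict z R) \<and> Kc z P z B)" for z
  have "(\<Sum>x\<in>(R \<rightarrow>\<^sub>E V). if Qp x then F R ((B,P)#bs) x else 0)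
      = (\<Sum>x\<in>(R \<rightarrow>\<^sub>E V). \<Sum>y\<in>(B \<rightarrow>\<^sub>E V). if Qp' (mrg R x y) then F (R \<union> B) bs (mrg R x y) else 0)"
  proof (rule sum.cong[OF refl])
    fix x assume x: "x \<in> (R \<rightarrow>\<^sub>E V)"
    have "Qp' (mrg R x y) \<longleftrightarrow> Qp x \<and> Kc x P y B" for y
      unfolding Qp'_def restrict_merge1[OF x] Kc_merge[OF disj PR] ..
    then show "(if Qp x then F R ((B,P)#bs) x else 0)
      = (\<Sum>y\<in>(B \<rightarrow>\<^sub>E V). if Qp' (mrg R x y) then F (R \<union> B) bs (mrg R x y) else 0)"
      by simp
  qed
  also have "\<dots> = (\<Sum>z\<in>(R \<union> B \<rightarrow>\<^sub>E V). if Qp' z then F (R \<union> B) bs z else 0)"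
    by (rule sum_PiE_split[OF disj fR fB, symmetric])
  also have "\<dots> = real (card {\<phi> \<in> (R \<union> B \<union> TV bs \<rightarrow>\<^sub>E V). Qp' (restrict \<phi> (R \<union> B)) \<and> okE bs \<phi>})"
    by (rule Cons.IH[OF wfb'])
  also have "{\<phi> \<in> (R \<union> B \<union> TV bs \<rightarrow>\<^sub>E V). Qp' (restrict \<phi> (R \<union> B)) \<and> okE bs \<phi>}
      = {\<phi> \<in> (R \<union> TV ((B,P)#bs) \<rightarrow>\<^sub>E V). Qp (restrict \<phi> R) \<and> okE ((B,P)#bs) \<phi>}"
  proof -
    have U: "R \<union> TV ((B,P)#bs) = R \<union> B \<union> TV bs" by auto
    have "Qp' (restrict \<phi> (R \<union> B)) \<and> okE bs \<phi> \<longleftrightarrow> Qp (restrict \<phi> R) \<and> okE ((B,P)#bs) \<phi>"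
      if \<phi>: "\<phi> \<in> (R \<union> B \<union> TV bs \<rightarrow>\<^sub>E V)" for \<phi>
    proof -
      have r: "restrict (restrict \<phi> (R \<union> B)) R = restrict \<phi> R" by (auto simp: restrict_def fun_eq_iff)
      have "Kc (restrict \<phi> (R \<union> B)) P (restrict \<phi> (R \<union> B)) B \<longleftrightarrow> (\<forall>i\<in>B. \<forall>j\<in>P. {\<phi> i, \<phi> j} \<in> E)"
      proof -
        have "\<forall>i\<in>B. \<phi> i \<in> V" using \<phi> by (auto simp: PiE_iff)
        then show ?thesis using PR unfolding Kc_def nb_def by (auto simp: subset_iff)
      qed
      then show ?thesis unfolding Qp'_def r okE_def by auto
    qed
    then show ?thesis unfolding U by blast
  qed
  finally show ?case unfolding p .
qed

definition Mc :: nat where "Mc = card {(u,v) \<in> V \<times> V. {u,v} \<in> E}"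

lemma sum_unit_tup: "(\<Sum>y\<in>({()} \<rightarrow>\<^sub>E V). g y) = (\<Sum>v\<in>V. g (\<lambda>u\<in>{()}. v))"
proof -
  have img: "({()} \<rightarrow>\<^sub>E V) = (\<lambda>v. \<lambda>u\<in>{()}. v) ` V"
  proof
    show "({()} \<rightarrow>\<^sub>E V) \<subseteq> (\<lambda>v. \<lambda>u\<in>{()}. v) ` V"
    proof
      fix y assume y: "y \<in> ({()} \<rightarrow>\<^sub>E V)"
      have "y = (\<lambda>u\<in>{()}. y ())" using y by (auto simp: fun_eq_iff PiE_iff extensional_def)
      moreover have "y () \<in> V" using y by auto
      ultimately show "y \<in> (\<lambda>v. \<lambda>u\<in>{()}. v) ` V" by blast
    qed
    show "(\<lambda>v. \<lambda>u\<in>{()}. v) ` V \<subseteq> ({()} \<rightarrow>\<^sub>E V)" by auto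
  qed
  have inj: "inj_on (\<lambda>v. \<lambda>u\<in>{()}. v) V"
    by (rule inj_onI) (metis restrict_apply' singletonI)
  show ?thesis unfolding img by (rule sum.reindex[OF inj, unfolded comp_def])
qed

lemma cn_unit: "cn (\<lambda>u\<in>{()}. v) {()} = real (card {w \<in> V. {w, v} \<in> E})"
  unfolding cn_def nb_def by simp

lemma sum_deg: "(\<Sum>y\<in>({()} \<rightarrow>\<^sub>E V). cn y {()}) = real Mc"
proof -
  have "(\<Sum>y\<in>({()} \<rightarrow>\<^sub>E V). cn y {()}) = (\<Sum>v\<in>V. real (card {w \<in> V. {v, w} \<in> E}))"
    unfolding sum_unit_tup cn_unit by (simp add: insert_commute)
  also have "\<dots> = real (\<Sum>v\<in>V. card {w \<in> V. {v, w} \<in> E})" by simp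
  also have "(\<Sum>v\<in>V. card {w \<in> V. {v, w} \<in> E}) = card (SIGMA v:V. {w \<in> V. {v, w} \<in> E})"
    using finV by (subst card_SigmaI) auto
  also have "(SIGMA v:V. {w \<in> V. {v, w} \<in> E}) = {(u,v) \<in> V \<times> V. {u,v} \<in> E}" by auto
  finally show ?thesis unfolding Mc_def .
qed

end

lemma wf_Pne: "wfb R bs \<Longrightarrow> \<forall>(B,P)\<in>set bs. P \<noteq> {}"
proof (induction bs arbitrary: R)
  case Nil then show ?case by simp
next
  case (Cons p bs)
  obtain B P where p: "p = (B,P)" by (cases p)
  show ?case using Cons.prems Cons.IH[of "R \<union> B"] p by auto
qed

lemma fin_alg:
  fixes r b L H N lp :: real
  assumes "0 < r" "r \<le> b" "lp \<le> (L + H/r - 2*N)/r" "H \<le> r*N"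
  shows "(r+b)*N + r*b*lp \<le> H + b*L"
proof -
  have h1: "r*lp \<le> L + H/r - 2*N" using assms(1,3) by (simp add: le_divide_eq mult.commute)
  have b0: "0 \<le> b" using assms by linarith
  have h2: "b*(r*lp) \<le> b*(L + H/r - 2*N)" using h1 b0 by (rule mult_left_mono)
  have hr: "H/r \<le> N" using assms(1,4) by (simp add: divide_le_eq mult.commute)
  have h3: "0 \<le> (b - r)*(N - H/r)" using assms(2) hr by simp
  have id: "H + b*L - ((r+b)*N + r*b*lp) = (b - r)*(N - H/r) + (b*(L + H/r - 2*N) - b*(r*lp))"
    using assms(1) by (simp add: field_simps)
  show ?thesis using id h2 h3 by linarith
qed

context sg begin

definition qd :: "(unit \<Rightarrow> 'b) \<Rightarrow> real" where "qd y = cn y {()} / Mc"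

lemma qd_facts:
  assumes Mp: "0 < Mc"
  shows "isd ({()} \<rightarrow>\<^sub>E V) qd" "spp {()} qd" "J {()} qd = ln Mc - 2 * ln (card V)"
proof -
  have fin: "finite ({()} \<rightarrow>\<^sub>E V)" using fin_tup[of "{()}"] by simp
  have nn: "\<forall>y\<in>({()} \<rightarrow>\<^sub>E V). 0 \<le> qd y" unfolding qd_def using cn_nonneg by (auto intro!: divide_nonneg_nonneg)
  have s1: "sum qd ({()} \<rightarrow>\<^sub>E V) = 1"
    unfolding qd_def using sum_deg Mp by (simp add: sum_divide_distrib[symmetric])
  show "isd ({()} \<rightarrow>\<^sub>E V) qd" unfolding isd_def using nn s1 by simp
  show "spp {()} qd" unfolding spp_def qd_def using Mp by (simp add: zero_less_divide_iff)
  have "Hn ({()} \<rightarrow>\<^sub>E V) qd = - (\<Sum>y\<in>({()} \<rightarrow>\<^sub>E V). qd y * ln (cn y {()}) - qd y * ln Mc)"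
    unfolding Hn_def
  proof (rule arg_cong[where f = uminus], rule sum.cong[OF refl])
    fix y assume "y \<in> ({()} \<rightarrow>\<^sub>E V)"
    show "qd y * ln (qd y) = qd y * ln (cn y {()}) - qd y * ln Mc"
    proof (cases "cn y {()} = 0")
      case True then show ?thesis unfolding qd_def by simp
    next
      case False
      then have "0 < cn y {()}" using cn_nonneg[of y "{()}"] by linarith
      then show ?thesis unfolding qd_def using Mp by (simp add: ln_div algebra_simps)
    qed
  qed
  also have "\<dots> = - Lc {()} qd + ln Mc"
    unfolding Lc_def using s1 by (simp add: sum_subtractf sum_distrib_right[symmetric])
  finally show "J {()} qd = ln Mc - 2 * ln (card V)" unfolding J_def by simp
qed

lemma final_ineq:
  assumes wfb: "wfb R ((Bf,R)#rest)" and Rne: "R \<noteq> {}" and le: "card R \<le> card Bf" and Mp: "0 < Mc"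
  shows "(card R + tv ((Bf,R)#rest)) * ln (card V) + te ((Bf,R)#rest) * (ln Mc - 2 * ln (card V))
         \<le> ln (\<Sum>x\<in>(R \<rightarrow>\<^sub>E V). F R ((Bf,R)#rest) x)"
    and "0 < (\<Sum>x\<in>(R \<rightarrow>\<^sub>E V). F R ((Bf,R)#rest) x)"
proof -
  define lp where "lp = ln Mc - 2 * ln (card V)"
  define N where "N = ln (card V)"
  define \<rho> where "\<rho> = chn qd {()} R"
  have fR: "finite R" using wfb by simp
  note qf = qd_facts[OF Mp]
  have u1: "finite {()}" "{()} \<noteq> {}" "card {()} \<le> card R" using fR Rne by (auto simp: Suc_le_eq card_gt_0_iff)
  have d: "isd (R \<rightarrow>\<^sub>E V) \<rho>" unfolding \<rho>_def by (rule chain_isd[OF fR qf(1,2)])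
  have Jmarg: "lp \<le> J P' (marg R P' \<rho>)" if P'R: "P' \<subseteq> R" and P'ne: "P' \<noteq> {}" for P'
  proof -
    have fP': "finite P'" using P'R fR finite_subset by blast
    have "J P' (marg R P' \<rho>) = J P' (chn qd {()} P')"
      unfolding \<rho>_def by (rule J_cong) (rule marg_chain[OF fR P'R _ qf(1,2)])
    moreover have "J {()} qd \<le> J P' (chn qd {()} P')"
      by (rule chain_J[OF u1(1) fP' u1(2) _ qf(1,2)]) (use fP' P'ne in \<open>simp add: Suc_le_eq card_gt_0_iff\<close>)
    ultimately show ?thesis using qf(3) unfolding lp_def by simp
  qed
  have tp: "\<forall>x\<in>(R \<rightarrow>\<^sub>E V). 0 < \<rho> x \<longrightarrow> topc R ((Bf,R)#rest) x"
  proof (intro ballI impI)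
    fix x assume x: "x \<in> (R \<rightarrow>\<^sub>E V)" and px: "0 < \<rho> x"
    show "topc R ((Bf,R)#rest) x" unfolding topc_def
    proof (intro ballI impI, clarify)
      fix B' P' assume "P' \<subseteq> R"
      then show "0 < cn x P'" using chain_pos_cn[OF qf(1) u1(2) x _ ] px unfolding \<rho>_def by blast
    qed
  qed
  have Pne_all: "\<forall>(B,P)\<in>set ((Bf,R)#rest). P \<noteq> {}" by (rule wf_Pne[OF wfb])
  have Jh: "\<forall>(B',P')\<in>set ((Bf,R)#rest). P' \<subseteq> R \<longrightarrow> lp \<le> J P' (marg R P' \<rho>)"
    using Jmarg Pne_all by auto
  note sf = step_facts[OF wfb d tp Jh]
  have wfb': "wfb (R \<union> Bf) rest" using wfb by simp
  have C: "tv rest * N + te rest * lp \<le> (\<Sum>z\<in>(R \<union> Bf \<rightarrow>\<^sub>E V). extd R Bf R \<rho> z * ln (F (R \<union> Bf) rest z))"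
    unfolding N_def by (rule claim[OF wfb' sf(1,2,3)])
  have ES: "card Bf * Lc R (marg R R \<rho>) + (\<Sum>z\<in>(R \<union> Bf \<rightarrow>\<^sub>E V). extd R Bf R \<rho> z * ln (F (R \<union> Bf) rest z))
         \<le> (\<Sum>x\<in>(R \<rightarrow>\<^sub>E V). \<rho> x * ln (F R ((Bf,R)#rest) x))"
    by (rule E_step[OF wfb d tp])
  have Lm: "Lc R (marg R R \<rho>) = Lc R \<rho>"
    unfolding Lc_def by (intro sum.cong refl) (simp add: marg_self[OF fR])
  have JR: "lp \<le> J R \<rho>" using Jmarg[OF order_refl Rne] unfolding Lm
    by (metis (no_types) J_cong marg_self[OF fR])
  have HR: "Hn (R \<rightarrow>\<^sub>E V) \<rho> \<le> card R * N" unfolding N_def by (rule Hn_le[OF fR d])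
  have rpos: "0 < real (card R)" using fR Rne by (simp add: card_gt_0_iff)
  have A: "(real (card R) + real (card Bf)) * N + real (card R) * real (card Bf) * lp \<le> Hn (R \<rightarrow>\<^sub>E V) \<rho> + real (card Bf) * Lc R \<rho>"
    by (rule fin_alg[OF rpos]) (use le JR HR in \<open>simp_all add: J_def N_def\<close>)
  have Fpos: "\<forall>x\<in>(R \<rightarrow>\<^sub>E V). 0 < \<rho> x \<longrightarrow> 0 < F R ((Bf,R)#rest) x"
    using F_pos[OF wfb] tp by blast
  have \<rho>nn: "\<forall>x\<in>(R \<rightarrow>\<^sub>E V). 0 \<le> \<rho> x" and \<rho>1: "sum \<rho> (R \<rightarrow>\<^sub>E V) = 1" using d unfolding isd_def by auto
  have G: "(\<Sum>x\<in>(R \<rightarrow>\<^sub>E V). \<rho> x * ln (F R ((Bf,R)#rest) x / \<rho> x)) \<le> ln (\<Sum>x\<in>(R \<rightarrow>\<^sub>E V). F R ((Bf,R)#rest) x)"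
    by (rule gibbs[OF fin_tup[OF fR] \<rho>nn \<rho>1 _ Fpos]) (use F_nonneg in blast)
  have GE: "(\<Sum>x\<in>(R \<rightarrow>\<^sub>E V). \<rho> x * ln (F R ((Bf,R)#rest) x / \<rho> x))
      = (\<Sum>x\<in>(R \<rightarrow>\<^sub>E V). \<rho> x * ln (F R ((Bf,R)#rest) x)) + Hn (R \<rightarrow>\<^sub>E V) \<rho>"
  proof -
    have "(\<Sum>x\<in>(R \<rightarrow>\<^sub>E V). \<rho> x * ln (F R ((Bf,R)#rest) x / \<rho> x))
        = (\<Sum>x\<in>(R \<rightarrow>\<^sub>E V). \<rho> x * ln (F R ((Bf,R)#rest) x) - \<rho> x * ln (\<rho> x))"
    proof (rule sum.cong[OF refl])
      fix x assume x: "x \<in> (R \<rightarrow>\<^sub>E V)"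
      show "\<rho> x * ln (F R ((Bf,R)#rest) x / \<rho> x) = \<rho> x * ln (F R ((Bf,R)#rest) x) - \<rho> x * ln (\<rho> x)"
      proof (cases "\<rho> x = 0")
        case False
        then have rp: "0 < \<rho> x" using \<rho>nn x by force
        then have fp: "0 < F R ((Bf,R)#rest) x" using Fpos x by blast
        have "ln (F R ((Bf,R)#rest) x / \<rho> x) = ln (F R ((Bf,R)#rest) x) - ln (\<rho> x)"
          using rp fp by (simp add: ln_div)
        then show ?thesis by (simp only: right_diff_distrib)
      qed simp
    qed
    then show ?thesis unfolding Hn_def by (simp add: sum_subtractf)
  qed
  have "(card R + tv ((Bf,R)#rest)) * N + te ((Bf,R)#rest) * lp
      = ((real (card R) + real (card Bf)) * N + real (card R) * real (card Bf) * lp) + (tv rest * N + te rest * lp)"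
    by (simp add: algebra_simps)
  also have "\<dots> \<le> Hn (R \<rightarrow>\<^sub>E V) \<rho> + card Bf * Lc R \<rho> + (\<Sum>z\<in>(R \<union> Bf \<rightarrow>\<^sub>E V). extd R Bf R \<rho> z * ln (F (R \<union> Bf) rest z))"
    using A C by linarith
  also have "\<dots> \<le> Hn (R \<rightarrow>\<^sub>E V) \<rho> + (\<Sum>x\<in>(R \<rightarrow>\<^sub>E V). \<rho> x * ln (F R ((Bf,R)#rest) x))"
    using ES unfolding Lm by linarith
  also have "\<dots> \<le> ln (\<Sum>x\<in>(R \<rightarrow>\<^sub>E V). F R ((Bf,R)#rest) x)" using G GE by linarith
  finally show "(card R + tv ((Bf,R)#rest)) * ln (card V) + te ((Bf,R)#rest) * (ln Mc - 2 * ln (card V))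
         \<le> ln (\<Sum>x\<in>(R \<rightarrow>\<^sub>E V). F R ((Bf,R)#rest) x)" unfolding N_def lp_def .
  obtain x0 where x0: "x0 \<in> (R \<rightarrow>\<^sub>E V)" "0 < \<rho> x0"
  proof -
    have "\<exists>x\<in>(R \<rightarrow>\<^sub>E V). 0 < \<rho> x"
    proof (rule ccontr)
      assume "\<not> ?thesis"
      then have "\<forall>x\<in>(R \<rightarrow>\<^sub>E V). \<rho> x = 0" using \<rho>nn by force
      then have "sum \<rho> (R \<rightarrow>\<^sub>E V) = 0" by simp
      then show False using \<rho>1 by simp
    qed
    then show ?thesis using that by blast
  qed
  show "0 < (\<Sum>x\<in>(R \<rightarrow>\<^sub>E V). F R ((Bf,R)#rest) x)"
  proof (rule sum_pos2[OF fin_tup[OF fR] x0(1)])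
    show "0 < F R ((Bf,R)#rest) x0" using Fpos x0 by blast
    show "\<And>i. i \<in> (R \<rightarrow>\<^sub>E V) \<Longrightarrow> 0 \<le> F R ((Bf,R)#rest) i" by (rule F_nonneg)
  qed
qed

end

locale tdg =
  fixes VH :: "'a set" and m :: nat and B P :: "nat \<Rightarrow> 'a set" and \<gamma> :: "nat \<Rightarrow> nat"
  assumes finVH: "finite VH"
    and h1: "1 \<le> m"
    and h2: "\<forall>i\<le>m. B i \<noteq> {}"
    and h3: "\<forall>i\<le>m. \<forall>j\<le>m. i \<noteq> j \<longrightarrow> B i \<inter> B j = {}"
    and h4: "(\<Union>i\<le>m. B i) = VH"
    and h5: "P 1 = B 0"
    and h6: "\<forall>i. 2 \<le> i \<and> i \<le> m \<longrightarrow> 1 \<le> \<gamma> i \<and> \<gamma> i \<le> i - 1 \<and> P i \<subseteq> B (\<gamma> i) \<and> card (P (\<gamma> i)) \<le> card (P i)"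
begin

lemma finB: "i \<le> m \<Longrightarrow> finite (B i)"
  using h4 finVH by (metis UN_upper atMost_iff finite_subset)

lemma Ppos: "1 \<le> i \<Longrightarrow> i \<le> m \<Longrightarrow> 0 < card (P i)"
proof (induction i rule: less_induct)
  case (less i)
  show ?case
  proof (cases "i = 1")
    case True
    then show ?thesis using h5 h2 finB[of 0] h1 by (simp add: card_gt_0_iff)
  next
    case False
    then have i2: "2 \<le> i" using less.prems by simp
    then have g: "1 \<le> \<gamma> i" "\<gamma> i < i" "card (P (\<gamma> i)) \<le> card (P i)" using h6 less.prems by auto
    then have "0 < card (P (\<gamma> i))" using less.IH less.prems by simp
    then show ?thesis using g by simp
  qed
qed

lemma Pne: "1 \<le> i \<Longrightarrow> i \<le> m \<Longrightarrow> P i \<noteq> {} \<and> finite (P i)"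
  using Ppos by (metis card_gt_0_iff)

lemma P_in: "2 \<le> i \<Longrightarrow> i \<le> m \<Longrightarrow> P i \<subseteq> B (\<gamma> i) \<and> 1 \<le> \<gamma> i \<and> \<gamma> i < i"
  using h6 by fastforce

lemma key_disj:
  assumes "2 \<le> i" "i \<le> m" "k < i" "P i \<subseteq> (\<Union>l<k. B l) \<union> B k"
  shows "\<gamma> i \<le> k"
proof (rule ccontr)
  assume "\<not> \<gamma> i \<le> k"
  then have gk: "k < \<gamma> i" by simp
  have pi: "P i \<subseteq> B (\<gamma> i)" "\<gamma> i < i" using P_in assms by auto
  have dl: "B (\<gamma> i) \<inter> B l = {}" if "l \<le> k" for l
  proof -
    have "l \<le> m" "\<gamma> i \<le> m" "\<gamma> i \<noteq> l" using that gk pi assms by auto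
    then show ?thesis using h3 by blast
  qed
  have "B (\<gamma> i) \<inter> ((\<Union>l<k. B l) \<union> B k) = {}"
  proof -
    have "\<forall>l<k. B (\<gamma> i) \<inter> B l = {}" using dl by simp
    then have "B (\<gamma> i) \<inter> (\<Union>l<k. B l) = {}" by blast
    then show ?thesis using dl[of k] by blast
  qed
  then have "P i = {}" using pi assms(4) by blast
  then show False using Pne assms by simp
qed

lemma tail_wf: "2 \<le> k \<Longrightarrow> k \<le> Suc m \<Longrightarrow> wfb (\<Union>l<k. B l) (map (\<lambda>i. (B i, P i)) [k..<Suc m])"
proof (induction "Suc m - k" arbitrary: k)
  case 0
  then have "k = Suc m" by simp
  moreover have "finite (\<Union>l<Suc m. B l)" using finB by (auto simp: less_Suc_eq_le)
  ultimately show ?case by simp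
next
  case (Suc d)
  then have km: "k \<le> m" by simp
  have IH: "wfb (\<Union>l<Suc k. B l) (map (\<lambda>i. (B i, P i)) [Suc k..<Suc m])"
    using Suc.hyps(1)[of "Suc k"] Suc.hyps(2) Suc.prems by simp
  have U: "(\<Union>l<Suc k. B l) = (\<Union>l<k. B l) \<union> B k" by (auto simp: lessThan_Suc)
  have up: "[k..<Suc m] = k # [Suc k..<Suc m]" using km by (simp add: upt_conv_Cons)
  have fR: "finite (\<Union>l<k. B l)" using finB km by auto
  have disj: "(\<Union>l<k. B l) \<inter> B k = {}"
  proof -
    have "B l \<inter> B k = {}" if "l < k" for l using h3 km that by auto
    then show ?thesis by blast
  qed
  have pk: "P k \<noteq> {}" using Pne Suc.prems km by simp
  have PR: "P k \<subseteq> (\<Union>l<k. B l)" using P_in[of k] Suc.prems km by blast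
  have cond: "\<forall>i\<in>{Suc k..<Suc m}.
      P i \<subseteq> (\<Union>l<k. B l) \<union> B k \<longrightarrow> P i \<subseteq> (\<Union>l<k. B l) \<or> (P i \<subseteq> B k \<and> card (P k) \<le> card (P i))"
  proof (intro ballI impI)
    fix i assume i': "i \<in> {Suc k..<Suc m}" and sub: "P i \<subseteq> (\<Union>l<k. B l) \<union> B k"
    then have i: "Suc k \<le> i" "i < Suc m" by auto
    have i2: "2 \<le> i" "i \<le> m" using i Suc.prems by auto
    have g: "\<gamma> i \<le> k" using key_disj[OF i2] i sub by simp
    have pi: "P i \<subseteq> B (\<gamma> i)" using P_in i2 by blast
    show "P i \<subseteq> (\<Union>l<k. B l) \<or> (P i \<subseteq> B k \<and> card (P k) \<le> card (P i))"
    proof (cases "\<gamma> i = k")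
      case True
      then show ?thesis using h6 i2 pi by auto
    next
      case False
      then have "\<gamma> i < k" using g by simp
      then show ?thesis using pi by blast
    qed
  qed
  show ?case unfolding up using fR finB[OF km] disj pk PR cond IH U by (simp del: upt_Suc)
qed

lemma head:
  "\<exists>R Bf. wfb R ((Bf,R) # map (\<lambda>i. (B i, P i)) [2..<Suc m]) \<and> R \<noteq> {} \<and> card R \<le> card Bf
     \<and> VH = R \<union> TV ((Bf,R) # map (\<lambda>i. (B i, P i)) [2..<Suc m])
     \<and> EJ ((Bf,R) # map (\<lambda>i. (B i, P i)) [2..<Suc m]) = (\<Union>i\<in>{1..m}. join_edges (B i) (P i))"
proof -
  let ?rest = "map (\<lambda>i. (B i, P i)) [2..<Suc m]"
  have U2: "(\<Union>l<2. B l) = B 0 \<union> B 1" by (auto simp: numeral_2_eq_2 lessThan_Suc)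
  have wr: "wfb (B 0 \<union> B 1) ?rest" using tail_wf[of 2] h1 U2 by simp
  have c1: "\<forall>i\<in>{2..<Suc m}. P i \<subseteq> B 0 \<union> B 1 \<longrightarrow> P i \<subseteq> B 1 \<and> card (B 0) \<le> card (P i)"
  proof (intro ballI impI)
    fix i assume i: "i \<in> {2..<Suc m}" and sub: "P i \<subseteq> B 0 \<union> B 1"
    have i2: "2 \<le> i" "i \<le> m" using i by auto
    have "\<gamma> i \<le> 1" using key_disj[OF i2, of 1] i2 sub U2 by (simp add: lessThan_Suc)
    moreover have "1 \<le> \<gamma> i" "P i \<subseteq> B (\<gamma> i)" using P_in i2 by auto
    ultimately have g: "\<gamma> i = 1" "P i \<subseteq> B 1" by auto
    moreover have "card (P (\<gamma> i)) \<le> card (P i)" using h6 i2 by blast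
    ultimately show "P i \<subseteq> B 1 \<and> card (B 0) \<le> card (P i)" using h5 by simp
  qed
  have d01: "B 0 \<inter> B 1 = {}" using h3 h1 by auto
  have f0: "finite (B 0)" and f1: "finite (B 1)" using finB h1 by auto
  have n0: "B 0 \<noteq> {}" and n1: "B 1 \<noteq> {}" using h2 h1 by auto
  have TVr: "TV ?rest = (\<Union>i\<in>{2..m}. B i)" unfolding TV_def set_map set_upt by (simp add: image_image atLeastLessThanSuc_atLeastAtMost)
  have EJr: "EJ ?rest = (\<Union>i\<in>{2..m}. join_edges (B i) (P i))" unfolding EJ_def set_map set_upt by (simp add: image_image atLeastLessThanSuc_atLeastAtMost)
  have VHe: "VH = B 0 \<union> B 1 \<union> (\<Union>i\<in>{2..m}. B i)"
  proof -
    have "{..m} = {0, 1} \<union> {2..m}" using h1 by auto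
    then show ?thesis using h4 by auto
  qed
  have EHe: "(\<Union>i\<in>{1..m}. join_edges (B i) (P i)) = join_edges (B 1) (B 0) \<union> (\<Union>i\<in>{2..m}. join_edges (B i) (P i))"
  proof -
    have "{1..m} = insert 1 {2..m}" using h1 by auto
    then show ?thesis using h5 by auto
  qed
  have jc: "join_edges X Y = join_edges Y X" for X Y :: "'a set"
    unfolding join_edges_def by (auto simp: insert_commute)
  show ?thesis
  proof (cases "card (B 0) \<le> card (B 1)")
    case True
    have cA: "\<forall>(B',P')\<in>set ?rest. P' \<subseteq> B 0 \<union> B 1 \<longrightarrow> P' \<subseteq> B 0 \<or> (P' \<subseteq> B 1 \<and> card (B 0) \<le> card P')"
      unfolding set_map set_upt using c1 by fastforce
    have w: "wfb (B 0) ((B 1, B 0) # ?rest)"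
      unfolding wfb.simps by (intro conjI f0 f1 d01 n0 subset_refl cA wr)
    have v: "VH = B 0 \<union> TV ((B 1, B 0) # ?rest)" using VHe TVr by auto
    have e: "EJ ((B 1, B 0) # ?rest) = (\<Union>i\<in>{1..m}. join_edges (B i) (P i))"
      using EHe EJr by simp
    show ?thesis by (rule exI[of _ "B 0"], rule exI[of _ "B 1"], intro conjI, fact w, fact n0, fact True, fact v, fact e)
  next
    case False
    have cB: "\<forall>(B',P')\<in>set ?rest. P' \<subseteq> B 0 \<union> B 1 \<longrightarrow> P' \<subseteq> B 1 \<or> (P' \<subseteq> B 0 \<and> card (B 1) \<le> card P')"
      unfolding set_map set_upt using c1 by fastforce
    have d10: "B 1 \<inter> B 0 = {}" using d01 by blast
    have u10: "B 1 \<union> B 0 = B 0 \<union> B 1" by blast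
    have w: "wfb (B 1) ((B 0, B 1) # ?rest)"
      unfolding wfb.simps u10 by (intro conjI f1 f0 d10 n1 subset_refl cB wr)
    have v: "VH = B 1 \<union> TV ((B 0, B 1) # ?rest)" using VHe TVr by auto
    have e: "EJ ((B 0, B 1) # ?rest) = (\<Union>i\<in>{1..m}. join_edges (B i) (P i))"
      using EHe EJr jc[of "B 0" "B 1"] by simp
    have le: "card (B 1) \<le> card (B 0)" using False by simp
    show ?thesis by (rule exI[of _ "B 1"], rule exI[of _ "B 0"], intro conjI, fact w, fact n1, fact le, fact v, fact e)
  qed
qed

end

context sg begin

lemma K2_count: "hom_count K2_V K2_E V E = Mc"
proof -
  have c: "(\<forall>u v. {u,v} \<in> {{0::nat,1}} \<longrightarrow> {f u, f v} \<in> E) \<longleftrightarrow> {f 0, f 1} \<in> E" for f :: "nat \<Rightarrow> 'b"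
  proof
    assume "\<forall>u v. {u,v} \<in> {{0::nat,1}} \<longrightarrow> {f u, f v} \<in> E"
    then show "{f 0, f 1} \<in> E" by blast
  next
    assume h: "{f 0, f 1} \<in> E"
    show "\<forall>u v. {u,v} \<in> {{0::nat,1}} \<longrightarrow> {f u, f v} \<in> E"
    proof (intro allI impI)
      fix u v :: nat assume "{u,v} \<in> {{0,1}}"
      then have "(u = 0 \<and> v = 1) \<or> (u = 1 \<and> v = 0)" by (auto simp: doubleton_eq_iff)
      then show "{f u, f v} \<in> E" using h by (auto simp: insert_commute)
    qed
  qed
  define A where "A = {f \<in> ({0::nat,1} \<rightarrow>\<^sub>E V). {f 0, f 1} \<in> E}"
  have eqA: "{f \<in> ({0::nat,1} \<rightarrow>\<^sub>E V). \<forall>u v. {u,v} \<in> {{0::nat,1}} \<longrightarrow> {f u, f v} \<in> E} = A"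
    unfolding A_def using c by blast
  have bij: "bij_betw (\<lambda>f. (f 0, f 1)) A {(u,v) \<in> V \<times> V. {u,v} \<in> E}"
  proof (rule bij_betw_byWitness[where f' = "\<lambda>(u,v). (\<lambda>i\<in>{0::nat,1}. if i = 0 then u else v)"])
    show "\<forall>a\<in>A. (\<lambda>(u, v). \<lambda>i\<in>{0::nat,1}. if i = 0 then u else v) (a 0, a 1) = a"
    proof
      fix a assume a: "a \<in> A"
      show "(\<lambda>(u, v). \<lambda>i\<in>{0::nat,1}. if i = 0 then u else v) (a 0, a 1) = a"
      proof
        fix i :: nat
        show "(\<lambda>(u, v). \<lambda>i\<in>{0::nat,1}. if i = 0 then u else v) (a 0, a 1) i = a i"
          using a PiE_arb[of a "{0::nat,1}" "\<lambda>_. V" i] unfolding A_def by auto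
      qed
    qed
    show "\<forall>a'\<in>{(u,v) \<in> V \<times> V. {u,v} \<in> E}. (\<lambda>f. (f 0, f 1)) ((\<lambda>(u, v). \<lambda>i\<in>{0::nat,1}. if i = 0 then u else v) a') = a'"
      by auto
    show "(\<lambda>f. (f 0, f 1)) ` A \<subseteq> {(u,v) \<in> V \<times> V. {u,v} \<in> E}"
      unfolding A_def by (auto simp: PiE_iff)
    show "(\<lambda>(u, v). \<lambda>i\<in>{0::nat,1}. if i = 0 then u else v) ` {(u,v) \<in> V \<times> V. {u,v} \<in> E} \<subseteq> A"
    proof
      fix f assume "f \<in> (\<lambda>(u, v). \<lambda>i\<in>{0::nat,1}. if i = 0 then u else v) ` {(u,v) \<in> V \<times> V. {u,v} \<in> E}"
      then obtain p where p: "p \<in> {(u,v) \<in> V \<times> V. {u,v} \<in> E}" and fp: "f = (\<lambda>(u, v). \<lambda>i\<in>{0::nat,1}. if i = 0 then u else v) p"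
        by (rule imageE)
      obtain u v where puv: "p = (u, v)" by (cases p)
      have uv: "u \<in> V" "v \<in> V" "{u,v} \<in> E" using p puv by auto
      have f: "f = (\<lambda>i\<in>{0::nat,1}. if i = 0 then u else v)" using fp puv by simp
      have "f \<in> ({0::nat,1} \<rightarrow>\<^sub>E V)" unfolding f using uv by (simp add: restrict_PiE_iff)
      moreover have "{f 0, f 1} \<in> E" unfolding f using uv by simp
      ultimately show "f \<in> A" unfolding A_def by blast
    qed
  qed
  show ?thesis unfolding hom_count_def K2_V_def K2_E_def eqA Mc_def by (rule bij_betw_same_card[OF bij])
qed

lemma Mc_le: "real Mc \<le> real (card V) ^ 2"
proof -
  have "Mc \<le> card (V \<times> V)" unfolding Mc_def using finV by (intro card_mono) auto
  then have "Mc \<le> card V * card V" by (simp add: card_cartesian_product)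
  then have "real Mc \<le> real (card V * card V)" by (simp only: of_nat_le_iff)
  then show ?thesis by (simp add: power2_eq_square)
qed

end

lemma TV_disj: "wfb R bs \<Longrightarrow> TV bs \<inter> R = {}"
proof (induction bs arbitrary: R)
  case Nil then show ?case by simp
next
  case (Cons p bs)
  obtain B P where p: "p = (B,P)" by (cases p)
  have "TV bs \<inter> (R \<union> B) = {}" using Cons.IH[of "R \<union> B"] Cons.prems p by simp
  moreover have "B \<inter> R = {}" using Cons.prems p by auto
  ultimately show ?case using p by auto
qed

lemma EJ_mem: "e \<in> EJ bs \<Longrightarrow> \<exists>u v. e = {u,v} \<and> u \<in> TV bs"
  unfolding EJ_def TV_def join_edges_def by force

lemma card_join:
  assumes "finite B" "finite P" "B \<inter> P = {}"
  shows "card (join_edges B P) = card B * card P"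
proof -
  have "inj_on (\<lambda>(u,v). {u,v}) (B \<times> P)"
  proof (rule inj_onI, clarify)
    fix u v u' v' assume h: "u \<in> B" "v \<in> P" "u' \<in> B" "v' \<in> P" "{u,v} = {u',v'}"
    then have "(u = u' \<and> v = v') \<or> (u = v' \<and> v = u')" by (auto simp: doubleton_eq_iff)
    then show "u = u' \<and> v = v'" using h assms(3) by blast
  qed
  then have "card (join_edges B P) = card (B \<times> P)" unfolding join_edges_img by (rule card_image)
  then show ?thesis by (simp add: card_cartesian_product)
qed

lemma card_EJ_eq: "wfb R bs \<Longrightarrow> finite (EJ bs) \<and> real (card (EJ bs)) = te bs"
proof (induction bs arbitrary: R)
  case Nil then show ?case by simp
next
  case (Cons p bs)
  obtain B P where p: "p = (B,P)" by (cases p)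
  have wfb: "wfb R ((B,P)#bs)" using Cons.prems p by simp
  have wfb': "wfb (R \<union> B) bs" and fB: "finite B" and fR: "finite R" and PR: "P \<subseteq> R" and disj: "R \<inter> B = {}"
    using wfb by auto
  have fP: "finite P" using PR fR finite_subset by blast
  have BP: "B \<inter> P = {}" using PR disj by blast
  have IH: "finite (EJ bs) \<and> real (card (EJ bs)) = te bs" by (rule Cons.IH[OF wfb'])
  have fJ: "finite (join_edges B P)" unfolding join_edges_img using fB fP by simp
  have TVd: "TV bs \<inter> (R \<union> B) = {}" by (rule TV_disj[OF wfb'])
  have dj: "join_edges B P \<inter> EJ bs = {}"
  proof (rule ccontr)
    assume "join_edges B P \<inter> EJ bs \<noteq> {}"
    then obtain e where e1: "e \<in> join_edges B P" and e2: "e \<in> EJ bs" by blast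
    from e1 obtain a b where ab: "e = {a,b}" "a \<in> B" "b \<in> P" unfolding join_edges_def by blast
    from EJ_mem[OF e2] obtain u v where uv: "e = {u,v}" "u \<in> TV bs" by blast
    have "u \<in> {a,b}" using ab uv by blast
    then have "u \<in> R \<union> B" using ab PR by blast
    then show False using uv TVd by blast
  qed
  have "card (EJ ((B,P)#bs)) = card (join_edges B P) + card (EJ bs)"
    using card_Un_disjoint[OF fJ _ dj] IH by simp
  then show ?case using IH fJ card_join[OF fB fP BP] p by simp
qed

theorem corollary1p10:
  fixes VH :: "'a set" and EH :: "'a set set" and VG :: "'b set" and EG :: "'b set set"
  assumes "simple_graph VH EH" and "tree_degenerate VH EH"
    and "simple_graph VG EG" and "VG \<noteq> {}"
  shows "hom_density VH EH VG EG \<ge> (hom_density K2_V K2_E VG EG) ^ card EH"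
proof -
  have finVH: "finite VH" using assms(1) unfolding simple_graph_def by blast
  have EHsub: "EH \<subseteq> Pow VH"
  proof
    fix e assume e: "e \<in> EH"
    have "EH \<subseteq> {e. \<exists>u v. e = {u, v} \<and> u \<noteq> v \<and> u \<in> VH \<and> v \<in> VH}"
      using assms(1) unfolding simple_graph_def by (rule conjunct2)
    then obtain u v where "e = {u,v}" "u \<in> VH" "v \<in> VH" using e by blast
    then show "e \<in> Pow VH" by simp
  qed
  have finEH: "finite EH" using finite_subset[OF EHsub] finVH by simp
  have finVG: "finite VG" using assms(3) unfolding simple_graph_def by blast
  interpret G: sg VG EG by unfold_locales (use finVG assms(4) in auto)
  from assms(2) obtain m :: nat and B P :: "nat \<Rightarrow> 'a set" and \<gamma> :: "nat \<Rightarrow> nat" where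
      h1: "1 \<le> m" and h2: "\<forall>i\<le>m. B i \<noteq> {}"
    and h3: "\<forall>i\<le>m. \<forall>j\<le>m. i \<noteq> j \<longrightarrow> B i \<inter> B j = {}"
    and h4: "(\<Union>i\<le>m. B i) = VH" and h5: "P 1 = B 0"
    and h6: "\<forall>i. 2 \<le> i \<and> i \<le> m \<longrightarrow> 1 \<le> \<gamma> i \<and> \<gamma> i \<le> i - 1 \<and> P i \<subseteq> B (\<gamma> i) \<and> card (P (\<gamma> i)) \<le> card (P i)"
    and h7: "EH = (\<Union>i\<in>{1..m}. join_edges (B i) (P i))"
    unfolding tree_degenerate_def by blast
  interpret T: tdg VH m B P \<gamma> by (rule tdg.intro[OF finVH h1 h2 h3 h4 h5 h6])
  obtain R Bf where H: "wfb R ((Bf,R) # map (\<lambda>i. (B i, P i)) [2..<Suc m]) \<and> R \<noteq> {} \<and> card R \<le> card Bf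
     \<and> VH = R \<union> TV ((Bf,R) # map (\<lambda>i. (B i, P i)) [2..<Suc m])
     \<and> EJ ((Bf,R) # map (\<lambda>i. (B i, P i)) [2..<Suc m]) = (\<Union>i\<in>{1..m}. join_edges (B i) (P i))"
    using T.head by iprover
  have wfb: "wfb R ((Bf,R) # map (\<lambda>i. (B i, P i)) [2..<Suc m])" using H by (rule conjunct1)
  have Rne: "R \<noteq> {}" using H by simp
  have le: "card R \<le> card Bf" using H by simp
  have VHe: "VH = R \<union> TV ((Bf,R) # map (\<lambda>i. (B i, P i)) [2..<Suc m])" using H by simp
  have EJe: "EJ ((Bf,R) # map (\<lambda>i. (B i, P i)) [2..<Suc m]) = (\<Union>i\<in>{1..m}. join_edges (B i) (P i))"
    using H by (elim conjE)
  define bs where "bs = (Bf,R) # map (\<lambda>i. (B i, P i)) [2..<Suc m]"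
  have wf0: "wfb R ((Bf,R) # map (\<lambda>i. (B i, P i)) [2..<Suc m])" by (rule wfb)
  have VHb: "VH = R \<union> TV bs" using VHe unfolding bs_def .
  have EHb: "EH = EJ bs" using EJe h7 unfolding bs_def by simp
  define n where "n = card VG"
  have npos: "0 < n" unfolding n_def using finVG assms(4) by (simp add: card_gt_0_iff)
  have hom: "real (hom_count VH EH VG EG) = (\<Sum>x\<in>(R \<rightarrow>\<^sub>E VG). G.F R bs x)"
  proof -
    have "{f \<in> (VH \<rightarrow>\<^sub>E VG). \<forall>u v. {u,v} \<in> EH \<longrightarrow> {f u, f v} \<in> EG}
        = {\<phi> \<in> (R \<union> TV bs \<rightarrow>\<^sub>E VG). (\<lambda>_. True) (restrict \<phi> R) \<and> G.okE bs \<phi>}"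
      unfolding VHb EHb G.okE_iff by simp
    then have "real (hom_count VH EH VG EG) = real (card {\<phi> \<in> (R \<union> TV bs \<rightarrow>\<^sub>E VG). (\<lambda>_. True) (restrict \<phi> R) \<and> G.okE bs \<phi>})"
      unfolding hom_count_def by simp
    also have "\<dots> = (\<Sum>x\<in>(R \<rightarrow>\<^sub>E VG). if (\<lambda>_. True) x then G.F R bs x else 0)"
      using G.F_count[OF wf0[folded bs_def], of "\<lambda>_. True"] by simp
    finally show ?thesis by simp
  qed
  have K2: "hom_density K2_V K2_E VG EG = real G.Mc / real n ^ 2"
    unfolding hom_density_def G.K2_count n_def by (simp add: K2_V_def power2_eq_square)
  have dens: "hom_density VH EH VG EG = (\<Sum>x\<in>(R \<rightarrow>\<^sub>E VG). G.F R bs x) / real n ^ card VH"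
    unfolding hom_density_def hom n_def ..
  have EHne: "EH \<noteq> {}"
  proof -
    obtain u where u: "u \<in> B 1" using h2 h1 by blast
    obtain v where v: "v \<in> B 0" using h2 by blast
    have "{u,v} \<in> join_edges (B 1) (P 1)" unfolding join_edges_def h5 using u v by blast
    then show ?thesis using h7 h1 by auto
  qed
  then have cEH: "0 < card EH" using finEH by (simp add: card_gt_0_iff)
  have Spos: "0 \<le> (\<Sum>x\<in>(R \<rightarrow>\<^sub>E VG). G.F R bs x)" by (intro sum_nonneg) (rule G.F_nonneg)
  show ?thesis
  proof (cases "G.Mc = 0")
    case True
    have z: "(real G.Mc / real n ^ 2) ^ card EH = 0" using cEH True by simp
    have "0 \<le> (\<Sum>x\<in>(R \<rightarrow>\<^sub>E VG). G.F R bs x) / real n ^ card VH" using Spos by simp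
    then show ?thesis unfolding K2 dens z .
  next
    case False
    then have Mp: "0 < G.Mc" by simp
    define N where "N = ln (real n)"
    define p where "p = real G.Mc / real n ^ 2"
    have pp: "0 < p" unfolding p_def using Mp npos by simp
    have lp: "ln p = ln (real G.Mc) - 2 * N" unfolding p_def N_def using Mp npos by (simp add: ln_div ln_realpow)
    have lp0: "ln p \<le> 0"
    proof -
      have "p \<le> 1" unfolding p_def using G.Mc_le npos unfolding n_def by simp
      then show ?thesis using pp by simp
    qed
    have N0: "0 \<le> N" unfolding N_def using npos by simp
    note FI = G.final_ineq[OF wf0 Rne le Mp]
    have cV: "real (card VH) \<le> real (card R) + tv bs" unfolding VHb by (rule card_TV[OF wf0[folded bs_def]])
    have cE: "real (card EH) = te bs" unfolding EHb using card_EJ_eq[OF wf0[folded bs_def]] by simp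
    have "real (card VH) * N \<le> (real (card R) + tv bs) * N" by (rule mult_right_mono[OF cV N0])
    then have "real (card VH) * N + real (card EH) * ln p \<le> (real (card R) + tv bs) * N + te bs * ln p"
      using cE by simp
    also have "\<dots> \<le> ln (\<Sum>x\<in>(R \<rightarrow>\<^sub>E VG). G.F R bs x)"
      using FI(1) unfolding bs_def[symmetric] lp N_def n_def by simp
    finally have L: "real (card VH) * N + real (card EH) * ln p \<le> ln (\<Sum>x\<in>(R \<rightarrow>\<^sub>E VG). G.F R bs x)" .
    have "ln (real n ^ card VH * p ^ card EH) = real (card VH) * N + real (card EH) * ln p"
      unfolding N_def using npos pp by (simp add: ln_mult ln_realpow)
    then have "ln (real n ^ card VH * p ^ card EH) \<le> ln (\<Sum>x\<in>(R \<rightarrow>\<^sub>E VG). G.F R bs x)" using L by simp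
    then have "real n ^ card VH * p ^ card EH \<le> (\<Sum>x\<in>(R \<rightarrow>\<^sub>E VG). G.F R bs x)"
      using FI(2) npos pp unfolding bs_def by simp
    then have "p ^ card EH \<le> (\<Sum>x\<in>(R \<rightarrow>\<^sub>E VG). G.F R bs x) / real n ^ card VH"
      using npos by (simp add: le_divide_eq mult.commute)
    then show ?thesis unfolding K2 dens p_def .
  qed
qed

end
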